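(* Let $0\le s<t\le T$ and let $f_{ts}$ be a function analytic in a neighbourhood of $\Pi_{(s,t)}=\{z=a+ib\in\mathbb C: a\in[s,t],\ b\in[-(t-s),t-s]\}$, real-valued on $[s,t]$ and bounded on $\Pi_{(s,t)}$. Then for any $\alpha\in(0,2H)$ and any $\varepsilon,\eta>0$, $$E\Big[\Big\|\int_s^tf_{ts}(u)\,dX^\varepsilon_u-\int_s^tf_{ts}(u)\,dX^\eta_u\Big\|^2\Big]\le c_\alpha\|f_{ts}\|^2_{\infty,\Pi_{(s,t)}}|t-s|^{2H-\alpha}|\varepsilon-\eta|^\alpha,$$ where the constant $c_\alpha$ does not depend on $s,t,\varepsilon,\eta$.
   Context: Fix $H\in(1/3,1/2)$, $n\ge1$, $T>0$. Let $\Pi^+=\{\mathrm{Im}\,z>0\}$, $c_H=\frac{H(1-2H)}{2\cos(\pi H)}$, and let $X'^{+,(1)},\dots,X'^{+,(n)}$ be independent copies of a centered complex Gaussian process $\{X'^+_z\}_{z\in\Pi^+}$ with analytic sample paths such that $E[X'^+_zX'^+_w]=0$ and $E[X'^+_z\overline{X'^+_w}]=c_H(-i(z-\bar w))^{2H-2}$ (principal branch). For $\varepsilon>0$ and $t\in\mathbb R$, $X^{\varepsilon,(j)}_t=2\,\mathrm{Re}\int_{i\varepsilon}^{t+i\varepsilon}X'^{+,(j)}_zdz$ (along any path in $\Pi^+$), and $X^\varepsilon=(X^{\varepsilon,(1)},\dots,X^{\varepsilon,(n)})$, a smooth $\mathbb R^{1,n}$-valued process; $\int_s^tf(u)dX^\varepsilon_u$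 is a Riemann–Stieltjes integral. $\|f\|_{\infty,\Pi}=\sup_{z\in\Pi}|f(z)|$. *)

theory Defs
  imports "HOL-Probability.Probability" "HOL-Complex_Analysis.Complex_Analysis"
begin

definition upper_half :: "complex set" where
  "upper_half = {z. Im z > 0}"

definition cH :: "real \<Rightarrow> real" where
  "cH H = H * (1 - 2 * H) / (2 * cos (pi * H))"

definition real_gaussian_rv :: "'a measure \<Rightarrow> ('a \<Rightarrow> real) \<Rightarrow> bool" where
  "real_gaussian_rv M Y \<longleftrightarrow>
     Y \<in> borel_measurable M \<and>
     ((\<exists>\<mu>. distr M borel Y = return borel \<mu>) \<or>
      (\<exists>\<mu> \<sigma>. \<sigma> > 0 \<and> distributed M lborel Y (normal_density \<mu> \<sigma>)))"

definition complex_gaussian_process ::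
    "'a measure \<Rightarrow> complex set \<Rightarrow> ('a \<Rightarrow> complex \<Rightarrow> complex) \<Rightarrow> bool" where
  "complex_gaussian_process M S Y \<longleftrightarrow>
     (\<forall>z\<in>S. (\<lambda>\<omega>. Y \<omega> z) \<in> borel_measurable M) \<and>
     (\<forall>(m::nat) (zs::nat \<Rightarrow> complex) (a::nat \<Rightarrow> real) (b::nat \<Rightarrow> real).
        (\<forall>k<m. zs k \<in> S) \<longrightarrow>
        real_gaussian_rv M (\<lambda>\<omega>. \<Sum>k<m. a k * Re (Y \<omega> (zs k)) + b k * Im (Y \<omega> (zs k))))"

text \<open>The smooth approximation
  X^eps_t = 2 Re \<integral>_{i eps}^{t + i eps} X'_z dz (taken along the horizontal segment,
  which lies in the upper half plane; by analyticity any path in it gives the same value).\<close>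
definition Xeps :: "(complex \<Rightarrow> complex) \<Rightarrow> real \<Rightarrow> real \<Rightarrow> real" where
  "Xeps Y \<epsilon> t = 2 * Re (contour_integral (linepath (\<i> * of_real \<epsilon>) (of_real t + \<i> * of_real \<epsilon>)) Y)"

definition has_RS_integral :: "(real \<Rightarrow> real) \<Rightarrow> (real \<Rightarrow> real) \<Rightarrow> real \<Rightarrow> real \<Rightarrow> real \<Rightarrow> bool" where
  "has_RS_integral f g a b I \<longleftrightarrow>
     (\<forall>e>0. \<exists>\<delta>>0. \<forall>(p::nat \<Rightarrow> real) (\<xi>::nat \<Rightarrow> real) (m::nat).
        p 0 = a \<and> p m = b \<and>
        (\<forall>k<m. p k < p (Suc k) \<and> p (Suc k) - p k < \<delta> \<and> p k \<le> \<xi> k \<and> \<xi> k \<le> p (Suc k))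
        \<longrightarrow> \<bar>(\<Sum>k<m. f (\<xi> k) * (g (p (Suc k)) - g (p k))) - I\<bar> < e)"

definition RS_integral :: "(real \<Rightarrow> real) \<Rightarrow> (real \<Rightarrow> real) \<Rightarrow> real \<Rightarrow> real \<Rightarrow> real" where
  "RS_integral f g a b = (THE I. has_RS_integral f g a b I)"

definition Pi_rect :: "real \<Rightarrow> real \<Rightarrow> complex set" where
  "Pi_rect s t = {z. s \<le> Re z \<and> Re z \<le> t \<and> -(t - s) \<le> Im z \<and> Im z \<le> t - s}"

definition sup_norm_on :: "(complex \<Rightarrow> complex) \<Rightarrow> complex set \<Rightarrow> real" where
  "sup_norm_on f S = (SUP z\<in>S. cmod (f z))"

end

theory Submission
  imports Defs
begin


lemma chain_mono:
  fixes p :: "nat \<Rightarrow> real"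
  assumes "\<forall>k<m. p k < p (Suc k)" "i \<le> j" "j \<le> m"
  shows "p i \<le> p j"
  using assms(2,3)
proof (induction j)
  case 0 then show ?case by simp
next
  case (Suc j)
  show ?case
  proof (cases "i = Suc j")
    case False
    then have "i \<le> j" using Suc by simp
    then have "p i \<le> p j" using Suc by simp
    also have "p j < p (Suc j)" using assms(1) Suc by simp
    finally show ?thesis by simp
  qed simp
qed

lemma integral_partition:
  fixes h :: "real \<Rightarrow> real" and p :: "nat \<Rightarrow> real"
  assumes "continuous_on {p 0..p m} h" "\<forall>k<m. p k < p (Suc k)"
  shows "integral {p 0..p m} h = (\<Sum>k<m. integral {p k..p (Suc k)} h)"
  using assms
proof (induction m)
  case 0 then show ?case by simp
next
  case (Suc m)
  have le1: "p 0 \<le> p m" using chain_mono[OF Suc.prems(2), of 0 m] by simp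
  have le2: "p m \<le> p (Suc m)" using Suc.prems(2) by auto
  have c1: "continuous_on {p 0..p m} h"
    using Suc.prems(1) by (rule continuous_on_subset) (use le2 in auto)
  have IH: "integral {p 0..p m} h = (\<Sum>k<m. integral {p k..p (Suc k)} h)"
    using Suc.IH c1 Suc.prems(2) by auto
  have int: "h integrable_on {p 0..p (Suc m)}"
    using Suc.prems(1) integrable_continuous_real by blast
  have "integral {p 0..p m} h + integral {p m..p (Suc m)} h = integral {p 0..p (Suc m)} h"
    using Henstock_Kurzweil_Integration.integral_combine[OF le1 le2 int] .
  then show ?case using IH by simp
qed

lemma RS_unique:
  assumes ab: "a < b" and I: "has_RS_integral \<phi> g a b I" and J: "has_RS_integral \<phi> g a b J"
  shows "I = J"
proof (rule ccontr)
  assume ne: "I \<noteq> J"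
  define e where "e = \<bar>I - J\<bar> / 2"
  have e: "e > 0" using ne by (simp add: e_def)
  obtain d1 where d1: "d1 > 0" and H1: "\<And>p \<xi> m. p 0 = a \<and> p m = b \<and>
        (\<forall>k<m. p k < p (Suc k) \<and> p (Suc k) - p k < d1 \<and> p k \<le> \<xi> k \<and> \<xi> k \<le> p (Suc k))
        \<Longrightarrow> \<bar>(\<Sum>k<m. \<phi> (\<xi> k) * (g (p (Suc k)) - g (p k))) - I\<bar> < e"
    using I e unfolding has_RS_integral_def by meson
  obtain d2 where d2: "d2 > 0" and H2: "\<And>p \<xi> m. p 0 = a \<and> p m = b \<and>
        (\<forall>k<m. p k < p (Suc k) \<and> p (Suc k) - p k < d2 \<and> p k \<le> \<xi> k \<and> \<xi> k \<le> p (Suc k))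
        \<Longrightarrow> \<bar>(\<Sum>k<m. \<phi> (\<xi> k) * (g (p (Suc k)) - g (p k))) - J\<bar> < e"
    using J e unfolding has_RS_integral_def by meson
  define d where "d = min d1 d2"
  have d: "d > 0" using d1 d2 by (simp add: d_def)
  obtain m :: nat where m: "(b - a) / d < real m" using reals_Archimedean2 by blast
  have mpos: "real m > 0" using m ab d
    by (metis divide_pos_pos diff_gt_0_iff_gt less_trans)
  then have m0: "m > 0" by simp
  define p where "p k = a + real k * (b - a) / real m" for k
  have step: "p (Suc k) - p k = (b - a) / real m" for k
    by (simp add: p_def add_divide_distrib[symmetric] algebra_simps)
  have small: "(b - a) / real m < d"
    using m mpos d ab by (simp add: field_simps)
  have pos: "(b - a) / real m > 0" using ab mpos by simp
  have lt: "p k < p (Suc k)" for k using step[of k] pos by linarith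
  have cond: "p 0 = a \<and> p m = b \<and>
        (\<forall>k<m. p k < p (Suc k) \<and> p (Suc k) - p k < d \<and> p k \<le> p k \<and> p k \<le> p (Suc k))"
    using step small ab mpos lt by (auto simp: p_def less_imp_le)
  have "\<bar>(\<Sum>k<m. \<phi> (p k) * (g (p (Suc k)) - g (p k))) - I\<bar> < e"
    by (rule H1) (use cond d_def in auto)
  moreover have "\<bar>(\<Sum>k<m. \<phi> (p k) * (g (p (Suc k)) - g (p k))) - J\<bar> < e"
    by (rule H2) (use cond d_def in auto)
  ultimately show False unfolding e_def by (smt (verit, best) field_sum_of_halves)
qed

lemma RS_C1:
  fixes \<phi> g g' :: "real \<Rightarrow> real"
  assumes ab: "a < b" and der: "\<And>u. (g has_real_derivative g' u) (at u)"
    and cg: "continuous_on {a..b} g'" and cphi: "continuous_on {a..b} \<phi>"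
  shows "has_RS_integral \<phi> g a b (integral {a..b} (\<lambda>u. \<phi> u * g' u))"
  unfolding has_RS_integral_def
proof (intro allI impI)
  fix e :: real assume e: "e > 0"
  obtain B1 where B1: "B1 > 0" "\<And>x. x \<in> {a..b} \<Longrightarrow> \<bar>\<phi> x\<bar> \<le> B1"
    using compact_imp_bounded[OF compact_continuous_image[OF cphi compact_Icc]]
    unfolding bounded_pos by fastforce
  obtain B2 where B2: "B2 > 0" "\<And>x. x \<in> {a..b} \<Longrightarrow> \<bar>g' x\<bar> \<le> B2"
    using compact_imp_bounded[OF compact_continuous_image[OF cg compact_Icc]]
    unfolding bounded_pos by fastforce
  define e1 where "e1 = e / (2 * (b - a) * (B1 + B2))"
  have e1: "e1 > 0" using e ab B1 B2 by (simp add: e1_def)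
  have uphi: "uniformly_continuous_on {a..b} \<phi>"
    using compact_uniformly_continuous[OF cphi compact_Icc] .
  have ug: "uniformly_continuous_on {a..b} g'"
    using compact_uniformly_continuous[OF cg compact_Icc] .
  obtain d1 where d1: "d1 > 0" "\<And>x x'. x \<in> {a..b} \<Longrightarrow> x' \<in> {a..b} \<Longrightarrow> dist x' x < d1 \<Longrightarrow> dist (\<phi> x') (\<phi> x) < e1"
    using uphi e1 unfolding uniformly_continuous_on_def by metis
  obtain d2 where d2: "d2 > 0" "\<And>x x'. x \<in> {a..b} \<Longrightarrow> x' \<in> {a..b} \<Longrightarrow> dist x' x < d2 \<Longrightarrow> dist (g' x') (g' x) < e1"
    using ug e1 unfolding uniformly_continuous_on_def by metis
  show "\<exists>\<delta>>0. \<forall>p \<xi> m. p 0 = a \<and> p m = b \<and>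
        (\<forall>k<m. p k < p (Suc k) \<and> p (Suc k) - p k < \<delta> \<and> p k \<le> \<xi> k \<and> \<xi> k \<le> p (Suc k)) \<longrightarrow>
        \<bar>(\<Sum>k<m. \<phi> (\<xi> k) * (g (p (Suc k)) - g (p k))) - integral {a..b} (\<lambda>u. \<phi> u * g' u)\<bar> < e"
  proof (intro exI[of _ "min d1 d2"] conjI allI impI)
    show "min d1 d2 > 0" using d1 d2 by simp
    fix p \<xi> m
    assume P: "p 0 = a \<and> p m = b \<and>
        (\<forall>k<m. p k < p (Suc k) \<and> p (Suc k) - p k < min d1 d2 \<and> p k \<le> \<xi> k \<and> \<xi> k \<le> p (Suc k))"
    have inc: "\<forall>k<m. p k < p (Suc k)" using P by blast
    have inab: "p k \<in> {a..b}" if "k \<le> m" for k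
      using chain_mono[OF inc, of 0 k] chain_mono[OF inc, of k m] P that by auto
    have "\<forall>k<m. \<exists>c. p k < c \<and> c < p (Suc k) \<and> g (p (Suc k)) - g (p k) = (p (Suc k) - p k) * g' c"
    proof (intro allI impI)
      fix k assume "k < m"
      then have "p k < p (Suc k)" using inc by blast
      from MVT2[OF this] der show "\<exists>c. p k < c \<and> c < p (Suc k) \<and> g (p (Suc k)) - g (p k) = (p (Suc k) - p k) * g' c"
        by blast
    qed
    then obtain c where c: "\<And>k. k < m \<Longrightarrow> p k < c k \<and> c k < p (Suc k) \<and> g (p (Suc k)) - g (p k) = (p (Suc k) - p k) * g' (c k)"
      by metis
    define h where "h u = \<phi> u * g' u" for u
    have ch: "continuous_on {a..b} h" unfolding h_def using cphi cg by (intro continuous_intros)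
    have part: "integral {a..b} h = (\<Sum>k<m. integral {p k..p (Suc k)} h)"
      using integral_partition[of p m h] ch inc P by auto
    have piece: "\<bar>\<phi> (\<xi> k) * (g (p (Suc k)) - g (p k)) - integral {p k..p (Suc k)} h\<bar>
        \<le> (B1 + B2) * e1 * (p (Suc k) - p k)" if k: "k < m" for k
    proof -
      have pk: "p k \<in> {a..b}" "p (Suc k) \<in> {a..b}" using inab k by auto
      have sub: "{p k..p (Suc k)} \<subseteq> {a..b}" using pk by auto
      have chk: "continuous_on {p k..p (Suc k)} h" using continuous_on_subset[OF ch sub] .
      define K where "K = \<phi> (\<xi> k) * g' (c k)"
      have hi: "((\<lambda>u. K - h u) has_integral (K * (p (Suc k) - p k) - integral {p k..p (Suc k)} h)) {p k..p (Suc k)}"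
      proof -
        have "((\<lambda>u. K) has_integral K * (p (Suc k) - p k)) {p k..p (Suc k)}"
          using has_integral_const_real[of K "p k" "p (Suc k)"] k inc by (simp add: mult.commute less_imp_le)
        moreover have "(h has_integral integral {p k..p (Suc k)} h) {p k..p (Suc k)}"
          using integrable_continuous_real[OF chk] by (simp add: has_integral_integral)
        ultimately show ?thesis by (rule has_integral_diff)
      qed
      have bnd: "norm (K - h u) \<le> (B1 + B2) * e1" if u: "u \<in> {p k..p (Suc k)}" for u
      proof -
        have uab: "u \<in> {a..b}" using u sub by auto
        have xiab: "\<xi> k \<in> {a..b}" using P k pk by fastforce
        have cab: "c k \<in> {a..b}" using c[OF k] pk by auto
        have dxi: "dist (\<xi> k) u < d1" using P k u by (auto simp: dist_real_def)
        have dc: "dist (c k) u < d2" using P k u c[OF k] by (auto simp: dist_real_def)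
        have 1: "\<bar>\<phi> (\<xi> k) - \<phi> u\<bar> < e1" using d1(2)[OF uab xiab dxi] by (simp add: dist_real_def)
        have 2: "\<bar>g' (c k) - g' u\<bar> < e1" using d2(2)[OF uab cab dc] by (simp add: dist_real_def)
        have "K - h u = \<phi> (\<xi> k) * (g' (c k) - g' u) + g' u * (\<phi> (\<xi> k) - \<phi> u)"
          by (simp add: K_def h_def algebra_simps)
        then have "\<bar>K - h u\<bar> \<le> \<bar>\<phi> (\<xi> k)\<bar> * \<bar>g' (c k) - g' u\<bar> + \<bar>g' u\<bar> * \<bar>\<phi> (\<xi> k) - \<phi> u\<bar>"
          by (metis abs_mult abs_triangle_ineq)
        also have "\<dots> \<le> B1 * e1 + B2 * e1"
          using B1(2)[OF xiab] B2(2)[OF uab] 1 2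
          by (intro add_mono mult_mono) auto
        finally show ?thesis by (simp add: algebra_simps)
      qed
      have "norm (K * (p (Suc k) - p k) - integral {p k..p (Suc k)} h) \<le> (B1 + B2) * e1 * Henstock_Kurzweil_Integration.content (cbox (p k) (p (Suc k)))"
        using has_integral_bound[of "(B1 + B2) * e1" "\<lambda>u. K - h u" _ "p k" "p (Suc k)"] hi bnd B1 B2 e1 by auto
      moreover have "Henstock_Kurzweil_Integration.content (cbox (p k) (p (Suc k))) = p (Suc k) - p k" using inc k by (simp add: less_imp_le)
      moreover have "\<phi> (\<xi> k) * (g (p (Suc k)) - g (p k)) = K * (p (Suc k) - p k)"
        using c[OF k] by (simp add: K_def)
      ultimately show ?thesis by simp
    qed
    have "\<bar>(\<Sum>k<m. \<phi> (\<xi> k) * (g (p (Suc k)) - g (p k))) - integral {a..b} h\<bar>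
        = \<bar>\<Sum>k<m. \<phi> (\<xi> k) * (g (p (Suc k)) - g (p k)) - integral {p k..p (Suc k)} h\<bar>"
      by (simp add: part sum_subtractf)
    also have "\<dots> \<le> (\<Sum>k<m. \<bar>\<phi> (\<xi> k) * (g (p (Suc k)) - g (p k)) - integral {p k..p (Suc k)} h\<bar>)"
      by (rule sum_abs)
    also have "\<dots> \<le> (\<Sum>k<m. (B1 + B2) * e1 * (p (Suc k) - p k))"
      by (rule sum_mono) (use piece in auto)
    also have "\<dots> = (B1 + B2) * e1 * (b - a)"
      using P by (simp add: sum_distrib_left[symmetric] sum_lessThan_telescope)
    also have "\<dots> = e / 2"
    proof -
      have "b - a \<noteq> 0" "B1 + B2 \<noteq> 0" using ab B1 B2 by auto
      then have D: "(b - a) * (B1 + B2) \<noteq> 0" by simp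
      have "e1 = e / (2 * ((b - a) * (B1 + B2)))" unfolding e1_def by (simp add: algebra_simps)
      then have "(B1 + B2) * e1 * (b - a) = (e / (2 * ((b - a) * (B1 + B2)))) * ((b - a) * (B1 + B2))"
        by (simp add: mult_ac)
      also have "\<dots> = e / 2" using D by simp
      finally show ?thesis .
    qed
    also have "\<dots> < e" using e by simp
    finally show "\<bar>(\<Sum>k<m. \<phi> (\<xi> k) * (g (p (Suc k)) - g (p k))) - integral {a..b} (\<lambda>u. \<phi> u * g' u)\<bar> < e"
      by (simp add: h_def[abs_def])
  qed
qed

lemma RS_C1_eq:
  fixes \<phi> g g' :: "real \<Rightarrow> real"
  assumes ab: "a < b" and der: "\<And>u. (g has_real_derivative g' u) (at u)"
    and cg: "continuous_on {a..b} g'" and cphi: "continuous_on {a..b} \<phi>"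
  shows "RS_integral \<phi> g a b = integral {a..b} (\<lambda>u. \<phi> u * g' u)"
  unfolding RS_integral_def
  using RS_C1[OF assms] RS_unique[OF ab] by blast

lemma convex_upper_half: "convex upper_half"
  unfolding upper_half_def by (rule convex_halfspace_Im_gt)

lemma open_upper_half: "open upper_half"
  unfolding upper_half_def by (rule open_halfspace_Im_gt)

lemma Xeps_deriv:
  assumes hol: "Y holomorphic_on upper_half" and e: "\<epsilon> > 0"
  shows "((Xeps Y \<epsilon>) has_real_derivative (2 * Re (Y (of_real u + \<i> * of_real \<epsilon>)))) (at u)"
proof -
  obtain G where G: "\<And>x. x \<in> upper_half \<Longrightarrow> (G has_field_derivative Y x) (at x within upper_half)"
    using holomorphic_convex_primitive'[OF convex_upper_half open_upper_half hol] by blast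
  have G': "(G has_field_derivative Y x) (at x)" if "x \<in> upper_half" for x
    using G[OF that] at_within_open[OF that open_upper_half] by simp
  define c where "c = \<i> * of_real \<epsilon>"
  have cin: "of_real v + c \<in> upper_half" for v using e by (simp add: c_def upper_half_def)
  have X: "Xeps Y \<epsilon> v = 2 * Re (G (of_real v + c) - G c)" for v
  proof -
    have ps: "path_image (linepath c (of_real v + c)) \<subseteq> upper_half"
      using closed_segment_subset[OF _ _ convex_upper_half] cin[of 0] cin[of v] by simp
    have "(Y has_contour_integral (G (of_real v + c) - G c)) (linepath c (of_real v + c))"
      using contour_integral_primitive[OF G valid_path_linepath ps] by simp
    then show ?thesis unfolding Xeps_def c_def
      by (simp add: contour_integral_unique)
  qed
  have d1: "((\<lambda>z. G (z + c)) has_field_derivative Y (of_real u + c)) (at (of_real u))"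
    using G'[OF cin[of u]] DERIV_shift by blast
  have d2: "((\<lambda>x. G (of_real x + c)) has_vector_derivative Y (of_real u + c)) (at u)"
    using has_vector_derivative_real_field[OF d1] by simp
  have d3: "((\<lambda>x. 2 * Re (G (of_real x + c) - G c)) has_real_derivative 2 * Re (Y (of_real u + c))) (at u)"
    using d2 by (auto intro!: derivative_eq_intros)
  show ?thesis using d3 X unfolding c_def by (simp add: fun_eq_iff[symmetric] X[abs_def])
qed

lemma Pi_rect_cbox: "Pi_rect s t = cbox (Complex s (-(t - s))) (Complex t (t - s))"
  unfolding Pi_rect_def cbox_complex_eq by auto

lemma Y_shift_holo:
  assumes hol: "Y holomorphic_on upper_half" and sub: "\<forall>z\<in>S. Im z + e > 0"
  shows "(\<lambda>z. Y (z + \<i> * of_real e)) holomorphic_on S"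
proof -
  have "(Y \<circ> (\<lambda>z. z + \<i> * of_real e)) holomorphic_on S"
  proof (rule holomorphic_on_compose)
    show "(\<lambda>z. z + \<i> * of_real e) holomorphic_on S" by (intro holomorphic_intros)
    show "Y holomorphic_on (\<lambda>z. z + \<i> * of_real e) ` S"
      by (rule holomorphic_on_subset[OF hol]) (use sub in \<open>auto simp: upper_half_def\<close>)
  qed
  then show ?thesis by (simp add: o_def)
qed

lemma DL:
  fixes Y f :: "complex \<Rightarrow> complex"
  assumes hol: "Y holomorphic_on upper_half" and an: "f analytic_on Pi_rect s t"
    and real: "\<forall>u\<in>{s..t}. Im (f (of_real u)) = 0" and st: "s < t" and e: "\<epsilon> > 0" "\<eta> > 0"
  shows "RS_integral (\<lambda>u. Re (f (of_real u))) (Xeps Y \<epsilon>) s t - RS_integral (\<lambda>u. Re (f (of_real u))) (Xeps Y \<eta>) s t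
     = 2 * Re (contour_integral (linepath (of_real s) (of_real s + \<i> * of_real (t - s))) (\<lambda>z. f z * (Y (z + \<i> * of_real \<epsilon>) - Y (z + \<i> * of_real \<eta>)))
             + contour_integral (linepath (of_real s + \<i> * of_real (t - s)) (of_real t + \<i> * of_real (t - s))) (\<lambda>z. f z * (Y (z + \<i> * of_real \<epsilon>) - Y (z + \<i> * of_real \<eta>)))
             - contour_integral (linepath (of_real t) (of_real t + \<i> * of_real (t - s))) (\<lambda>z. f z * (Y (z + \<i> * of_real \<epsilon>) - Y (z + \<i> * of_real \<eta>))))"
proof -
  define L where "L = t - s"
  define h where "h z = f z * (Y (z + \<i> * of_real \<epsilon>) - Y (z + \<i> * of_real \<eta>))" for z
  define m0 where "m0 = min \<epsilon> \<eta>"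
  have m0: "m0 > 0" using e by (simp add: m0_def)
  obtain V where V: "open V" "Pi_rect s t \<subseteq> V" "f holomorphic_on V"
    using an analytic_on_holomorphic by blast
  have cpt: "compact (Pi_rect s t)" by (simp add: Pi_rect_cbox)
  have cvx: "convex (Pi_rect s t)" by (simp add: Pi_rect_cbox convex_box)
  obtain d where d: "d > 0" "(\<Union>x\<in>Pi_rect s t. ball x d) \<subseteq> V"
    using compact_subset_open_imp_ball_epsilon_subset[OF cpt V(1,2)] by blast
  define S0 where "S0 = (\<Union>x\<in>Pi_rect s t. \<Union>y\<in>ball 0 d. {x + y})"
  have S0eq: "S0 = (\<Union>x\<in>Pi_rect s t. ball x d)"
    unfolding S0_def
  proof (intro equalityI subsetI)
    fix z assume "z \<in> (\<Union>x\<in>Pi_rect s t. \<Union>y\<in>ball 0 d. {x + y})"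
    then obtain x y where "x \<in> Pi_rect s t" "y \<in> ball 0 d" "z = x + y" by blast
    then show "z \<in> (\<Union>x\<in>Pi_rect s t. ball x d)"
      by (intro UN_I[of x]) (auto simp: dist_norm)
  next
    fix z assume "z \<in> (\<Union>x\<in>Pi_rect s t. ball x d)"
    then obtain x where "x \<in> Pi_rect s t" "z \<in> ball x d" by blast
    then show "z \<in> (\<Union>x\<in>Pi_rect s t. \<Union>y\<in>ball 0 d. {x + y})"
      by (intro UN_I[of x] UN_I[of "z - x"]) (auto simp: dist_norm norm_minus_commute)
  qed
  define S where "S = S0 \<inter> {z. Im z > - m0}"
  have Sconv: "convex S" unfolding S_def S0_def
    by (intro convex_Int convex_sums cvx convex_ball convex_halfspace_Im_gt)
  have Sopen: "open S" unfolding S_def S0eq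
    by (intro open_Int open_UN ballI open_ball open_halfspace_Im_gt)
  have SV: "S \<subseteq> V" using d(2) unfolding S_def S0eq by blast
  have holh: "h holomorphic_on S"
  proof -
    have "\<forall>z\<in>S. Im z + \<epsilon> > 0" "\<forall>z\<in>S. Im z + \<eta> > 0"
      unfolding S_def m0_def by auto
    then show ?thesis unfolding h_def
      by (intro holomorphic_intros holomorphic_on_subset[OF V(3) SV] Y_shift_holo[OF hol])
  qed
  define R where "R = Pi_rect s t \<inter> {z. Im z \<ge> 0}"
  have Rconv: "convex R" unfolding R_def by (intro convex_Int cvx convex_halfspace_Im_ge)
  have RS: "R \<subseteq> S"
  proof
    fix z assume z: "z \<in> R"
    then have "z \<in> S0" unfolding S0eq R_def using d(1) by (intro UN_I[of z]) auto
    then show "z \<in> S" using z m0 unfolding S_def R_def by auto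
  qed
  define A where "A = (of_real s :: complex)"
  define B where "B = of_real s + \<i> * of_real L"
  define C where "C = of_real t + \<i> * of_real L"
  define D where "D = (of_real t :: complex)"
  have inR: "A \<in> R" "B \<in> R" "C \<in> R" "D \<in> R"
    using st unfolding A_def B_def C_def D_def R_def Pi_rect_def L_def by auto
  have seg: "closed_segment P Q \<subseteq> S" if "P \<in> R" "Q \<in> R" for P Q
    using closed_segment_subset[OF that Rconv] RS by blast
  have conth: "continuous_on (closed_segment P Q) h" if "P \<in> R" "Q \<in> R" for P Q
    using holomorphic_on_imp_continuous_on[OF holomorphic_on_subset[OF holh seg[OF that]]] .
  have hc: "(h has_contour_integral contour_integral (linepath P Q) h) (linepath P Q)" if "P \<in> R" "Q \<in> R" for P Q
    using has_contour_integral_integral[OF contour_integrable_continuous_linepath[OF conth[OF that]]] .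
  define g where "g = linepath A B +++ (linepath B C +++ (linepath C D +++ linepath D A))"
  have vg: "valid_path g" unfolding g_def by (intro valid_path_join valid_path_linepath) auto
  have pig: "path_image g \<subseteq> S" unfolding g_def
    using seg inR by (simp add: path_image_join)
  have clg: "pathfinish g = pathstart g" unfolding g_def by simp
  have z: "(h has_contour_integral 0) g"
    using Cauchy_theorem_convex_simple[OF holh Sconv vg pig clg] .
  have "(h has_contour_integral (contour_integral (linepath A B) h + (contour_integral (linepath B C) h
        + (contour_integral (linepath C D) h + contour_integral (linepath D A) h)))) g"
    unfolding g_def using inR
    by (intro has_contour_integral_join hc valid_path_join valid_path_linepath) auto
  then have sum0: "contour_integral (linepath A B) h + (contour_integral (linepath B C) h
        + (contour_integral (linepath C D) h + contour_integral (linepath D A) h)) = 0"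
    using z has_contour_integral_unique by blast
  have rCD: "contour_integral (linepath C D) h = - contour_integral (linepath D C) h"
    using contour_integral_reverse_linepath[OF conth[of C D]] inR by simp
  have rDA: "contour_integral (linepath D A) h = - contour_integral (linepath A D) h"
    using contour_integral_reverse_linepath[OF conth[of D A]] inR by simp
  have real_seg: "contour_integral (linepath A D) h = contour_integral (linepath A B) h + contour_integral (linepath B C) h - contour_integral (linepath D C) h"
    using sum0 rCD rDA by (simp add: algebra_simps)
  have ADint: "((\<lambda>x. h (of_real x)) has_integral contour_integral (linepath A D) h) {s..t}"
  proof -
    have "(h has_contour_integral contour_integral (linepath A D) h) (linepath A D)" using hc inR by simp
    then show ?thesis
      using has_contour_integral_linepath_Reals_iff[of A D h] st unfolding A_def D_def by simp
  qed
  have ReInt: "((\<lambda>x. Re (h (of_real x))) has_integral Re (contour_integral (linepath A D) h)) {s..t}"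
    using has_integral_linear[OF ADint bounded_linear_Re] by (simp add: o_def)
  have fcont: "continuous_on {s..t} (\<lambda>u. Re (f (of_real u)))"
  proof -
    have "continuous_on (Pi_rect s t) f"
      using holomorphic_on_imp_continuous_on[OF holomorphic_on_subset[OF V(3) V(2)]] .
    moreover have "of_real ` {s..t} \<subseteq> Pi_rect s t" by (auto simp: Pi_rect_def)
    ultimately have "continuous_on {s..t} (f \<circ> of_real)"
      by (intro continuous_on_compose continuous_intros) (auto elim: continuous_on_subset)
    then show ?thesis by (intro continuous_intros) (simp add: o_def)
  qed
  have Ycont: "continuous_on {s..t} (\<lambda>u. 2 * Re (Y (of_real u + \<i> * of_real e')))" if "e' > 0" for e'
  proof -
    have "continuous_on UNIV (\<lambda>z. Y (z + \<i> * of_real e'))" if "\<forall>z\<in>UNIV. Im z + e' > 0" for e'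
      using holomorphic_on_imp_continuous_on[OF Y_shift_holo[OF hol that]] .
    have "continuous_on {z. Im z > - e'} (\<lambda>z. Y (z + \<i> * of_real e'))"
      using holomorphic_on_imp_continuous_on[OF Y_shift_holo[OF hol, of "{z. Im z > - e'}"]] by auto
    moreover have "of_real ` {s..t} \<subseteq> {z. Im z > - e'}" using that by auto
    ultimately have "continuous_on {s..t} ((\<lambda>z. Y (z + \<i> * of_real e')) \<circ> of_real)"
      by (intro continuous_on_compose continuous_intros) (auto elim: continuous_on_subset)
    then show ?thesis by (intro continuous_intros) (simp add: o_def)
  qed
  have RSe: "RS_integral (\<lambda>u. Re (f (of_real u))) (Xeps Y e') s t
      = integral {s..t} (\<lambda>u. Re (f (of_real u)) * (2 * Re (Y (of_real u + \<i> * of_real e'))))" if "e' > 0" for e'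
    by (rule RS_C1_eq[OF st Xeps_deriv[OF hol that] Ycont[OF that] fcont])
  have i1: "(\<lambda>u. Re (f (of_real u)) * (2 * Re (Y (of_real u + \<i> * of_real e')))) integrable_on {s..t}" if "e' > 0" for e'
    using integrable_continuous_real[OF continuous_on_mult[OF fcont Ycont[OF that]]] .
  have "RS_integral (\<lambda>u. Re (f (of_real u))) (Xeps Y \<epsilon>) s t - RS_integral (\<lambda>u. Re (f (of_real u))) (Xeps Y \<eta>) s t
      = integral {s..t} (\<lambda>u. Re (f (of_real u)) * (2 * Re (Y (of_real u + \<i> * of_real \<epsilon>))) - Re (f (of_real u)) * (2 * Re (Y (of_real u + \<i> * of_real \<eta>))))"
    using RSe[OF e(1)] RSe[OF e(2)] integral_diff[OF i1[OF e(1)] i1[OF e(2)]] by simp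
  also have "\<dots> = integral {s..t} (\<lambda>u. 2 * Re (h (of_real u)))"
    by (rule integral_cong) (use real in \<open>auto simp: h_def algebra_simps\<close>)
  also have "\<dots> = 2 * Re (contour_integral (linepath A D) h)"
    using ReInt by (simp add: integral_mult_right integral_unique)
  finally have X: "RS_integral (\<lambda>u. Re (f (of_real u))) (Xeps Y \<epsilon>) s t - RS_integral (\<lambda>u. Re (f (of_real u))) (Xeps Y \<eta>) s t
      = 2 * Re (contour_integral (linepath A B) h + contour_integral (linepath B C) h - contour_integral (linepath D C) h)"
    unfolding real_seg .
  show ?thesis using X unfolding h_def[abs_def] A_def B_def C_def D_def L_def .
qed




lemma min_interp:
  fixes P Q \<alpha> :: real
  assumes "P \<ge> 0" "Q \<ge> 0" "0 < \<alpha>" "\<alpha> < 1" "x \<le> P" "x \<le> Q"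
  shows "x \<le> P powr (1 - \<alpha>) * Q powr \<alpha>"
proof (cases "P \<le> Q")
  case True
  have "x \<le> P" by fact
  also have "P = P powr (1 - \<alpha>) * P powr \<alpha>"
    using assms by (cases "P = 0") (auto simp: powr_add[symmetric])
  also have "\<dots> \<le> P powr (1 - \<alpha>) * Q powr \<alpha>"
    using True assms by (intro mult_left_mono powr_mono2) auto
  finally show ?thesis .
next
  case False
  have "x \<le> Q" by fact
  also have "Q = Q powr (1 - \<alpha>) * Q powr \<alpha>"
    using assms by (cases "Q = 0") (auto simp: powr_add[symmetric])
  also have "\<dots> \<le> P powr (1 - \<alpha>) * Q powr \<alpha>"
    using False assms by (intro mult_right_mono powr_mono2) auto
  finally show ?thesis .
qed

lemma MVT_powr:
  fixes a m \<beta> :: real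
  assumes "0 < a" "a \<le> m" "\<beta> < 0"
  shows "a powr \<beta> - m powr \<beta> \<le> - \<beta> * a powr (\<beta> - 1) * (m - a)"
proof (cases "a = m")
  case False
  then have am: "a < m" using assms by simp
  have "\<And>x. a \<le> x \<Longrightarrow> x \<le> m \<Longrightarrow> ((\<lambda>x. x powr \<beta>) has_real_derivative \<beta> * x powr (\<beta> - 1)) (at x)"
    using assms by (auto intro!: derivative_eq_intros)
  from MVT2[OF am this] obtain z where z: "a < z" "z < m" "m powr \<beta> - a powr \<beta> = (m - a) * (\<beta> * z powr (\<beta> - 1))"
    by blast
  have "z powr (\<beta> - 1) \<le> a powr (\<beta> - 1)"
    using z assms by (intro powr_mono2') auto
  then have "- \<beta> * z powr (\<beta> - 1) * (m - a) \<le> - \<beta> * a powr (\<beta> - 1) * (m - a)"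
    using assms am by (intro mult_right_mono mult_left_mono) auto
  then show ?thesis using z by (simp add: algebra_simps)
qed simp

lemma E1:
  fixes a b \<beta> \<alpha> :: real
  assumes a: "0 < a" "a \<le> b" and \<beta>: "-2 \<le> \<beta>" "\<beta> < 0" and \<alpha>: "0 < \<alpha>" "\<alpha> < 1"
  shows "(2 * a) powr \<beta> + (2 * b) powr \<beta> - 2 * (a + b) powr \<beta> \<le> (b - a) powr \<alpha> * a powr (\<beta> - \<alpha>)"
proof -
  define m where "m = (a + b) / 2"
  have am: "a \<le> m" "m \<le> b" "0 < m" using a by (auto simp: m_def)
  define br where "br = a powr \<beta> + b powr \<beta> - 2 * m powr \<beta>"
  have eq: "(2 * a) powr \<beta> + (2 * b) powr \<beta> - 2 * (a + b) powr \<beta> = 2 powr \<beta> * br"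
  proof -
    have "a + b = 2 * m" by (simp add: m_def)
    then show ?thesis using a am by (simp add: br_def powr_mult algebra_simps)
  qed
  have bm: "b powr \<beta> \<le> m powr \<beta>" using am \<beta> by (intro powr_mono2') auto
  have brP: "br \<le> a powr \<beta>"
  proof -
    have "0 \<le> m powr \<beta>" by simp
    then show ?thesis using bm unfolding br_def by linarith
  qed
  have brQ: "br \<le> (b - a) * a powr (\<beta> - 1)"
  proof -
    have "br \<le> a powr \<beta> - m powr \<beta>" using bm by (simp add: br_def)
    also have "\<dots> \<le> - \<beta> * a powr (\<beta> - 1) * (m - a)" using MVT_powr[OF a(1) am(1) \<beta>(2)] .
    also have "\<dots> \<le> (b - a) * a powr (\<beta> - 1)"
    proof -
      have h1: "m - a = (b - a) / 2" by (simp add: m_def field_simps)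
      have h2: "0 \<le> (2 + \<beta>) * (b - a)" using \<beta> a by simp
      have h3: "- \<beta> * (m - a) = (b - a) - (2 + \<beta>) * (b - a) / 2" by (simp add: h1 field_simps)
      have hh: "- \<beta> * (m - a) \<le> b - a" using h2 h3 by linarith
      show ?thesis using mult_right_mono[OF hh, of "a powr (\<beta> - 1)"] by (simp add: mult_ac)
    qed
    finally show ?thesis .
  qed
  have X0: "0 \<le> (b - a) powr \<alpha> * a powr (\<beta> - \<alpha>)" by simp
  have "max 0 br \<le> (a powr \<beta>) powr (1 - \<alpha>) * ((b - a) * a powr (\<beta> - 1)) powr \<alpha>"
    using min_interp[of "a powr \<beta>" "(b - a) * a powr (\<beta> - 1)" \<alpha> "max 0 br"] brP brQ \<alpha> a by auto
  also have "\<dots> = (b - a) powr \<alpha> * a powr (\<beta> - \<alpha>)"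
  proof -
    have "(a powr \<beta>) powr (1 - \<alpha>) * ((b - a) * a powr (\<beta> - 1)) powr \<alpha>
        = a powr (\<beta> * (1 - \<alpha>)) * ((b - a) powr \<alpha> * a powr ((\<beta> - 1) * \<alpha>))"
      using a by (simp add: powr_powr powr_mult)
    also have "\<dots> = (b - a) powr \<alpha> * a powr (\<beta> * (1 - \<alpha>) + (\<beta> - 1) * \<alpha>)"
      by (simp add: powr_add mult_ac)
    also have "\<beta> * (1 - \<alpha>) + (\<beta> - 1) * \<alpha> = \<beta> - \<alpha>" by (simp add: algebra_simps)
    finally show ?thesis .
  qed
  finally have mx: "max 0 br \<le> (b - a) powr \<alpha> * a powr (\<beta> - \<alpha>)" .
  have "2 powr \<beta> * br \<le> max 0 br"
  proof (cases "br \<ge> 0")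
    case True
    have "2 powr \<beta> \<le> 2 powr (0::real)" using \<beta> by (intro powr_mono) auto
    then have "2 powr \<beta> \<le> 1" by simp
    then show ?thesis using True mult_right_mono[of "2 powr \<beta>" 1 br] by simp
  next
    case False then show ?thesis by (simp add: mult_nonneg_nonpos)
  qed
  then show ?thesis using eq mx by linarith
qed

lemma cH_pos: assumes "0 < H" "H < 1/2" shows "cH H > 0"
proof -
  have "0 < pi * H" using assms by simp
  moreover have "pi * H < pi / 2" using assms pi_gt_zero by (simp add: field_simps)
  ultimately have "cos (pi * H) > 0" using pi_gt_zero by (intro cos_gt_zero_pi) linarith+
  then show ?thesis using assms by (simp add: cH_def)
qed

lemma shift_arg: "- \<i> * ((z + \<i> * of_real e1) - cnj (z + \<i> * of_real e2)) = of_real (2 * Im z + e1 + e2)"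
  by (simp add: complex_eq_iff)

lemma VAR:
  fixes Z :: "'a \<Rightarrow> complex \<Rightarrow> complex" and M :: "'a measure"
  assumes cov: "\<And>z w. z \<in> upper_half \<Longrightarrow> w \<in> upper_half \<Longrightarrow>
        integrable M (\<lambda>\<omega>. Z \<omega> z * cnj (Z \<omega> w)) \<and>
        (\<integral>\<omega>. Z \<omega> z * cnj (Z \<omega> w) \<partial>M)
          = of_real (cH H) * (- \<i> * (z - cnj w)) powr (of_real (2 * H - 2))"
    and H: "0 < H" "H < 1/2" and \<alpha>: "0 < \<alpha>" "\<alpha> < 1"
    and z: "Im z \<ge> 0" and e: "\<epsilon> > 0" "\<eta> > 0"
  shows "(\<integral>\<^sup>+\<omega>. ennreal ((cmod (Z \<omega> (z + \<i> * of_real \<epsilon>) - Z \<omega> (z + \<i> * of_real \<eta>)))\<^sup>2) \<partial>M)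
     \<le> ennreal (cH H * \<bar>\<epsilon> - \<eta>\<bar> powr \<alpha> * (Im z + min \<epsilon> \<eta>) powr (2 * H - 2 - \<alpha>))"
proof -
  define z1 where "z1 = z + \<i> * of_real \<epsilon>"
  define z2 where "z2 = z + \<i> * of_real \<eta>"
  define \<beta> where "\<beta> = 2 * H - 2"
  have in1: "z1 \<in> upper_half" "z2 \<in> upper_half" using z e by (auto simp: z1_def z2_def upper_half_def)
  define k where "k a b \<omega> = Z \<omega> a * cnj (Z \<omega> b)" for a b \<omega>
  have ik: "integrable M (k a b)" if "a \<in> upper_half" "b \<in> upper_half" for a b
    using cov[OF that] unfolding k_def by blast
  have Kval: "(\<integral>\<omega>. k (z + \<i> * of_real e1) (z + \<i> * of_real e2) \<omega> \<partial>M) = of_real (cH H * (2 * Im z + e1 + e2) powr \<beta>)"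
    if "e1 > 0" "e2 > 0" for e1 e2
  proof -
    have u: "z + \<i> * of_real e1 \<in> upper_half" "z + \<i> * of_real e2 \<in> upper_half"
      using z that by (auto simp: upper_half_def)
    have "(\<integral>\<omega>. k (z + \<i> * of_real e1) (z + \<i> * of_real e2) \<omega> \<partial>M)
        = of_real (cH H) * (of_real (2 * Im z + e1 + e2)) powr (of_real \<beta>)"
      using cov[OF u] unfolding k_def shift_arg \<beta>_def by simp
    also have "\<dots> = of_real (cH H * (2 * Im z + e1 + e2) powr \<beta>)"
      using z that by (subst powr_of_real) auto
    finally show ?thesis .
  qed
  define W where "W \<omega> = Z \<omega> z1 - Z \<omega> z2" for \<omega>
  have sq: "(cmod (W \<omega>))\<^sup>2 = Re (k z1 z1 \<omega> - k z1 z2 \<omega> - k z2 z1 \<omega> + k z2 z2 \<omega>)" for \<omega>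
  proof -
    have "of_real ((cmod (W \<omega>))\<^sup>2) = W \<omega> * cnj (W \<omega>)" by (rule complex_norm_square)
    also have "\<dots> = k z1 z1 \<omega> - k z1 z2 \<omega> - k z2 z1 \<omega> + k z2 z2 \<omega>"
      by (simp add: W_def k_def algebra_simps)
    finally show ?thesis by (metis Re_complex_of_real)
  qed
  have iW: "integrable M (\<lambda>\<omega>. k z1 z1 \<omega> - k z1 z2 \<omega> - k z2 z1 \<omega> + k z2 z2 \<omega>)"
    using ik in1 by auto
  have iW2: "integrable M (\<lambda>\<omega>. (cmod (W \<omega>))\<^sup>2)"
    unfolding sq using integrable_Re[OF iW] .
  have "(\<integral>\<^sup>+\<omega>. ennreal ((cmod (W \<omega>))\<^sup>2) \<partial>M) = ennreal (\<integral>\<omega>. (cmod (W \<omega>))\<^sup>2 \<partial>M)"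
    by (rule nn_integral_eq_integral[OF iW2]) auto
  also have "(\<integral>\<omega>. (cmod (W \<omega>))\<^sup>2 \<partial>M) = Re (\<integral>\<omega>. k z1 z1 \<omega> - k z1 z2 \<omega> - k z2 z1 \<omega> + k z2 z2 \<omega> \<partial>M)"
    unfolding sq by (rule integral_Re[OF iW])
  also have "(\<integral>\<omega>. k z1 z1 \<omega> - k z1 z2 \<omega> - k z2 z1 \<omega> + k z2 z2 \<omega> \<partial>M)
      = (\<integral>\<omega>. k z1 z1 \<omega> \<partial>M) - (\<integral>\<omega>. k z1 z2 \<omega> \<partial>M) - (\<integral>\<omega>. k z2 z1 \<omega> \<partial>M) + (\<integral>\<omega>. k z2 z2 \<omega> \<partial>M)"
    using ik in1 by simp
  also have "\<dots> = of_real (cH H * (2 * Im z + \<epsilon> + \<epsilon>) powr \<beta>) - of_real (cH H * (2 * Im z + \<epsilon> + \<eta>) powr \<beta>)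
       - of_real (cH H * (2 * Im z + \<eta> + \<epsilon>) powr \<beta>) + of_real (cH H * (2 * Im z + \<eta> + \<eta>) powr \<beta>)"
    unfolding z1_def z2_def using Kval e by simp
  finally have eq: "(\<integral>\<^sup>+\<omega>. ennreal ((cmod (W \<omega>))\<^sup>2) \<partial>M)
      = ennreal (cH H * ((2 * Im z + 2 * \<epsilon>) powr \<beta> + (2 * Im z + 2 * \<eta>) powr \<beta> - 2 * (2 * Im z + \<epsilon> + \<eta>) powr \<beta>))"
    by (simp add: algebra_simps)
  define a where "a = Im z + min \<epsilon> \<eta>"
  define b where "b = Im z + max \<epsilon> \<eta>"
  have ab: "0 < a" "a \<le> b" using z e by (auto simp: a_def b_def)
  have \<beta>b: "-2 \<le> \<beta>" "\<beta> < 0" using H by (auto simp: \<beta>_def)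
  have E: "(2 * a) powr \<beta> + (2 * b) powr \<beta> - 2 * (a + b) powr \<beta> \<le> (b - a) powr \<alpha> * a powr (\<beta> - \<alpha>)"
    by (rule E1[OF ab \<beta>b \<alpha>])
  have same: "(2 * Im z + 2 * \<epsilon>) powr \<beta> + (2 * Im z + 2 * \<eta>) powr \<beta> - 2 * (2 * Im z + \<epsilon> + \<eta>) powr \<beta>
      = (2 * a) powr \<beta> + (2 * b) powr \<beta> - 2 * (a + b) powr \<beta>"
    by (cases "\<epsilon> \<le> \<eta>") (auto simp: a_def b_def algebra_simps max_def min_def)
  have bma: "b - a = \<bar>\<epsilon> - \<eta>\<bar>" by (auto simp: a_def b_def max_def min_def)
  have cpos: "cH H > 0" using cH_pos H by simp
  have "cH H * ((2 * Im z + 2 * \<epsilon>) powr \<beta> + (2 * Im z + 2 * \<eta>) powr \<beta> - 2 * (2 * Im z + \<epsilon> + \<eta>) powr \<beta>)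
      \<le> cH H * (\<bar>\<epsilon> - \<eta>\<bar> powr \<alpha> * a powr (\<beta> - \<alpha>))"
    using E same bma cpos by (intro mult_left_mono) auto
  then show ?thesis
    unfolding eq[unfolded W_def z1_def z2_def] a_def \<beta>_def by (intro ennreal_leI) (simp add: mult_ac)
qed




lemma floor_approx: "(\<lambda>k. real_of_int \<lfloor>x * real (Suc k)\<rfloor> / real (Suc k)) \<longlonglongrightarrow> x"
proof (rule tendsto_sandwich[of "\<lambda>k. x - 1 / real (Suc k)" _ _ "\<lambda>k. x"])
  show "\<forall>\<^sub>F k in sequentially. x - 1 / real (Suc k) \<le> real_of_int \<lfloor>x * real (Suc k)\<rfloor> / real (Suc k)"
  proof (intro always_eventually allI)
    fix k
    have "x * real (Suc k) - 1 \<le> real_of_int \<lfloor>x * real (Suc k)\<rfloor>" by linarith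
    then have "(x * real (Suc k) - 1) / real (Suc k) \<le> real_of_int \<lfloor>x * real (Suc k)\<rfloor> / real (Suc k)"
      by (rule divide_right_mono) simp
    moreover have "(x * real (Suc k) - 1) / real (Suc k) = x - 1 / real (Suc k)"
      by (simp add: diff_divide_distrib)
    ultimately show "x - 1 / real (Suc k) \<le> real_of_int \<lfloor>x * real (Suc k)\<rfloor> / real (Suc k)"
      by simp
  qed
  show "\<forall>\<^sub>F k in sequentially. real_of_int \<lfloor>x * real (Suc k)\<rfloor> / real (Suc k) \<le> x"
  proof (intro always_eventually allI)
    fix k
    have "real_of_int \<lfloor>x * real (Suc k)\<rfloor> \<le> x * real (Suc k)" by linarith
    then show "real_of_int \<lfloor>x * real (Suc k)\<rfloor> / real (Suc k) \<le> x"
      by (simp add: field_simps)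
  qed
  have "(\<lambda>k. 1 / real (Suc k)) \<longlonglongrightarrow> 0" using LIMSEQ_inverse_real_of_nat by (simp add: inverse_eq_divide)
  then show "(\<lambda>k. x - 1 / real (Suc k)) \<longlonglongrightarrow> x" using tendsto_diff[of "\<lambda>_. x" x] by force
qed simp

lemma JM:
  fixes Z :: "'a \<Rightarrow> complex \<Rightarrow> complex" and g :: "real \<Rightarrow> complex"
  assumes meas: "\<And>z. z \<in> upper_half \<Longrightarrow> (\<lambda>\<omega>. Z \<omega> z) \<in> borel_measurable M"
    and cont: "\<And>\<omega>. \<omega> \<in> space M \<Longrightarrow> continuous_on upper_half (Z \<omega>)"
    and gc: "continuous_on UNIV g" and gU: "\<And>\<tau>. g \<tau> \<in> upper_half"
  shows "(\<lambda>x. Z (fst x) (g (snd x))) \<in> borel_measurable (M \<Otimes>\<^sub>M lborel)"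
proof (rule borel_measurable_LIMSEQ_metric)
  fix k :: nat
  show "(\<lambda>x. Z (fst x) (g (real_of_int \<lfloor>snd x * real (Suc k)\<rfloor> / real (Suc k)))) \<in> borel_measurable (M \<Otimes>\<^sub>M lborel)"
  proof (rule measurable_compose_countable[where f="\<lambda>i x. Z (fst x) (g (real_of_int i / real (Suc k)))"
        and g="\<lambda>x. \<lfloor>snd x * real (Suc k)\<rfloor>"])
    fix i :: int
    show "(\<lambda>x. Z (fst x) (g (real_of_int i / real (Suc k)))) \<in> borel_measurable (M \<Otimes>\<^sub>M lborel)"
      using measurable_compose[OF measurable_fst meas[OF gU]] by simp
  next
    show "(\<lambda>x. \<lfloor>snd x * real (Suc k)\<rfloor>) \<in> M \<Otimes>\<^sub>M lborel \<rightarrow>\<^sub>M count_space UNIV"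
      by measurable
  qed
next
  fix x :: "'a \<times> real" assume x: "x \<in> space (M \<Otimes>\<^sub>M lborel)"
  then have om: "fst x \<in> space M" by (auto simp: space_pair_measure)
  have gl: "(\<lambda>k. g (real_of_int \<lfloor>snd x * real (Suc k)\<rfloor> / real (Suc k))) \<longlonglongrightarrow> g (snd x)"
    using continuous_on_tendsto_compose[OF gc floor_approx] by simp
  show "(\<lambda>k. Z (fst x) (g (real_of_int \<lfloor>snd x * real (Suc k)\<rfloor> / real (Suc k)))) \<longlonglongrightarrow> Z (fst x) (g (snd x))"
    using continuous_on_tendsto_compose[OF cont[OF om] gl gU] gU by simp
qed

lemma GSL:
  fixes Z :: "'a \<Rightarrow> complex \<Rightarrow> complex" and M :: "'a measure" and f :: "complex \<Rightarrow> complex"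
  assumes prob: "prob_space M"
    and meas: "\<And>z. z \<in> upper_half \<Longrightarrow> (\<lambda>\<omega>. Z \<omega> z) \<in> borel_measurable M"
    and hol: "\<And>\<omega>. \<omega> \<in> space M \<Longrightarrow> Z \<omega> holomorphic_on upper_half"
    and cov: "\<And>z w. z \<in> upper_half \<Longrightarrow> w \<in> upper_half \<Longrightarrow>
        integrable M (\<lambda>\<omega>. Z \<omega> z * cnj (Z \<omega> w)) \<and>
        (\<integral>\<omega>. Z \<omega> z * cnj (Z \<omega> w) \<partial>M)
          = of_real (cH H) * (- \<i> * (z - cnj w)) powr (of_real (2 * H - 2))"
    and H: "0 < H" "H < 1/2" and \<alpha>: "0 < \<alpha>" "\<alpha> < 1"
    and PQ: "Im P \<ge> 0" "Im Q \<ge> 0"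
    and fc: "continuous_on (closed_segment P Q) f" and fb: "\<And>z. z \<in> closed_segment P Q \<Longrightarrow> cmod (f z) \<le> F"
    and e: "\<epsilon> > 0" "\<eta> > 0" "\<epsilon> \<noteq> \<eta>"
  shows "\<exists>B. B \<in> borel_measurable M \<and>
     (\<forall>\<omega>\<in>space M. ennreal ((cmod (contour_integral (linepath P Q) (\<lambda>z. f z * (Z \<omega> (z + \<i> * of_real \<epsilon>) - Z \<omega> (z + \<i> * of_real \<eta>)))))\<^sup>2) \<le> B \<omega>) \<and>
     (\<integral>\<^sup>+\<omega>. B \<omega> \<partial>M) \<le> ennreal ((cmod (Q - P))\<^sup>2 * F\<^sup>2) *
       (\<integral>\<^sup>+\<tau>. ennreal (indicator {0..1} \<tau> * sqrt (cH H * \<bar>\<epsilon> - \<eta>\<bar> powr \<alpha> * (Im (linepath P Q (max 0 (min 1 \<tau>))) + min \<epsilon> \<eta>) powr (2 * H - 2 - \<alpha>))) \<partial>lborel)\<^sup>2"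
proof -
  interpret prob_space M by (rule prob)
  interpret PSF: pair_sigma_finite M lborel
    by (intro pair_sigma_finite.intro prob_space_imp_sigma_finite prob sigma_finite_lborel)
  define lp where "lp \<tau> = linepath P Q (max 0 (min 1 \<tau>))" for \<tau>
  define m0 where "m0 = min \<epsilon> \<eta>"
  define w where "w \<tau> = sqrt (cH H * \<bar>\<epsilon> - \<eta>\<bar> powr \<alpha> * (Im (lp \<tau>) + m0) powr (2 * H - 2 - \<alpha>))" for \<tau>
  define c1 where "c1 = \<i> * of_real \<epsilon>"
  define c2 where "c2 = \<i> * of_real \<eta>"
  have m0: "m0 > 0" using e by (simp add: m0_def)
  have lpseg: "lp \<tau> \<in> closed_segment P Q" for \<tau>
    unfolding lp_def by (rule linepath_in_path) auto
  have lp01: "lp \<tau> = linepath P Q \<tau>" if "\<tau> \<in> {0..1}" for \<tau> using that by (simp add: lp_def)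
  have segIm: "closed_segment P Q \<subseteq> {z. Im z \<ge> 0}"
    using closed_segment_subset[OF _ _ convex_halfspace_Im_ge, of P 0 Q] PQ by auto
  have lpIm: "Im (lp \<tau>) \<ge> 0" for \<tau> using lpseg segIm by blast
  have lpc: "continuous_on UNIV lp" unfolding lp_def linepath_def by (intro continuous_intros)
  have lpU1: "lp \<tau> + c1 \<in> upper_half" for \<tau> using lpIm[of \<tau>] e by (simp add: c1_def upper_half_def)
  have lpU2: "lp \<tau> + c2 \<in> upper_half" for \<tau> using lpIm[of \<tau>] e by (simp add: c2_def upper_half_def)
  have cpos: "cH H > 0" using cH_pos H by simp
  have dpos: "\<bar>\<epsilon> - \<eta>\<bar> powr \<alpha> > 0" using e by simp
  have wpos: "w \<tau> > 0" for \<tau>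
  proof -
    have "Im (lp \<tau>) + m0 > 0" using lpIm[of \<tau>] m0 by linarith
    then show ?thesis unfolding w_def using cpos dpos by simp
  qed
  have wc: "continuous_on UNIV w"
  proof -
    have pp: "\<And>\<tau>. Im (lp \<tau>) + m0 > 0" using lpIm m0 by (smt (verit))
    then have "\<And>\<tau>. Im (lp \<tau>) + m0 \<noteq> 0" by (metis less_irrefl)
    then show ?thesis unfolding w_def using lpc pp
      by (intro continuous_intros continuous_on_powr') (auto intro: continuous_intros)
  qed
  have wm[measurable]: "w \<in> borel_measurable borel" using wc borel_measurable_continuous_onI by blast
  have Zc: "continuous_on UNIV (\<lambda>\<tau>. Z \<omega> (lp \<tau> + c))" if "\<omega> \<in> space M" "\<And>\<tau>. lp \<tau> + c \<in> upper_half" for \<omega> c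
  proof -
    have "continuous_on UNIV (\<lambda>\<tau>. lp \<tau> + c)" using lpc by (intro continuous_intros)
    moreover have "continuous_on upper_half (Z \<omega>)" using holomorphic_on_imp_continuous_on[OF hol[OF that(1)]] .
    ultimately show ?thesis using continuous_on_compose2[of upper_half "Z \<omega>" UNIV "\<lambda>\<tau>. lp \<tau> + c"] that(2) by auto
  qed
  define V where "V \<omega> \<tau> = cmod (Z \<omega> (lp \<tau> + c1) - Z \<omega> (lp \<tau> + c2))" for \<omega> \<tau>
  have Vc: "continuous_on UNIV (V \<omega>)" if "\<omega> \<in> space M" for \<omega>
    unfolding V_def using Zc[OF that lpU1] Zc[OF that lpU2] by (intro continuous_intros)
  have jm1[measurable]: "(\<lambda>x. Z (fst x) (lp (snd x) + c1)) \<in> borel_measurable (M \<Otimes>\<^sub>M lborel)"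
    by (rule JM[OF meas holomorphic_on_imp_continuous_on[OF hol]]) (use lpc lpU1 in \<open>auto intro: continuous_intros\<close>)
  have jm2[measurable]: "(\<lambda>x. Z (fst x) (lp (snd x) + c2)) \<in> borel_measurable (M \<Otimes>\<^sub>M lborel)"
    by (rule JM[OF meas holomorphic_on_imp_continuous_on[OF hol]]) (use lpc lpU2 in \<open>auto intro: continuous_intros\<close>)
  define G where "G \<omega> \<tau> = ennreal (indicator {0..1} \<tau> * ((V \<omega> \<tau>)\<^sup>2 / w \<tau>))" for \<omega> \<tau>
  have Gm: "(\<lambda>x. G (fst x) (snd x)) \<in> borel_measurable (M \<Otimes>\<^sub>M lborel)"
    unfolding G_def V_def by measurable
  define A where "A = (\<integral>\<^sup>+\<tau>. ennreal (indicator {0..1} \<tau> * w \<tau>) \<partial>lborel)"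
  define K where "K = ennreal ((cmod (Q - P))\<^sup>2 * F\<^sup>2)"
  define B where "B \<omega> = K * A * (\<integral>\<^sup>+\<tau>. G \<omega> \<tau> \<partial>lborel)" for \<omega>
  have Gm': "case_prod G \<in> borel_measurable (M \<Otimes>\<^sub>M lborel)" using Gm by (simp add: case_prod_beta')
  have Bm: "B \<in> borel_measurable M"
    unfolding B_def using lborel.borel_measurable_nn_integral[OF Gm'] by measurable
  have F0: "F \<ge> 0" using fb[of P] by (meson ends_in_segment(1) norm_ge_zero order_trans)
  have pw: "ennreal ((cmod (contour_integral (linepath P Q) (\<lambda>z. f z * (Z \<omega> (z + c1) - Z \<omega> (z + c2)))))\<^sup>2) \<le> B \<omega>"
    if om: "\<omega> \<in> space M" for \<omega>
  proof -
    define h where "h z = f z * (Z \<omega> (z + c1) - Z \<omega> (z + c2))" for z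
    have segU1: "z + c1 \<in> upper_half" if "z \<in> closed_segment P Q" for z
      using segIm that e by (auto simp: c1_def upper_half_def)
    have segU2: "z + c2 \<in> upper_half" if "z \<in> closed_segment P Q" for z
      using segIm that e by (auto simp: c2_def upper_half_def)
    have Zcu: "continuous_on upper_half (Z \<omega>)" using holomorphic_on_imp_continuous_on[OF hol[OF om]] .
    have hc: "continuous_on (closed_segment P Q) h"
    proof -
      have "continuous_on (closed_segment P Q) (\<lambda>z. Z \<omega> (z + c))" if "\<And>z. z \<in> closed_segment P Q \<Longrightarrow> z + c \<in> upper_half" for c
      proof (rule continuous_on_compose2[OF Zcu, of "closed_segment P Q" "\<lambda>z. z + c"])
        show "continuous_on (closed_segment P Q) (\<lambda>z. z + c)" by (intro continuous_intros)
      qed (use that in auto)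
      then show ?thesis unfolding h_def using fc segU1 segU2 by (intro continuous_intros) auto
    qed
    have ci: "contour_integral (linepath P Q) h = integral {0..1} (\<lambda>x. h (linepath P Q x) * (Q - P))"
    proof -
      have "(h has_contour_integral contour_integral (linepath P Q) h) (linepath P Q)"
        using has_contour_integral_integral[OF contour_integrable_continuous_linepath[OF hc]] .
      then have "((\<lambda>x. h (linepath P Q x) * (Q - P)) has_integral contour_integral (linepath P Q) h) {0..1}"
        by (simp add: has_contour_integral_linepath)
      then show ?thesis by (rule integral_unique[symmetric])
    qed
    have Vcc: "continuous_on {0..1} (V \<omega>)" using Vc[OF om] continuous_on_subset by blast
    have hlc: "continuous_on {0..1} (\<lambda>x. h (linepath P Q x) * (Q - P))"
    proof -
      have "continuous_on {0..1} (linepath P Q)" by (rule continuous_on_linepath)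
      moreover have "linepath P Q ` {0..1} \<subseteq> closed_segment P Q" by (simp add: linepath_image_01)
      ultimately have "continuous_on {0..1} (h \<circ> linepath P Q)"
        using continuous_on_compose continuous_on_subset hc by blast
      then show ?thesis by (intro continuous_intros) (simp add: o_def)
    qed
    define I where "I = integral {0..1} (V \<omega>)"
    have Vnn: "V \<omega> \<tau> \<ge> 0" for \<tau> by (simp add: V_def)
    have I0: "I \<ge> 0" unfolding I_def using Vnn by (intro integral_nonneg integrable_continuous_real Vcc) auto
    have bound: "cmod (contour_integral (linepath P Q) h) \<le> integral {0..1} (\<lambda>x. cmod (Q - P) * F * V \<omega> x)"
      unfolding ci
    proof (rule integral_norm_bound_integral)
      show "(\<lambda>x. h (linepath P Q x) * (Q - P)) integrable_on {0..1}" using integrable_continuous_real[OF hlc] .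
      show "(\<lambda>x. cmod (Q - P) * F * V \<omega> x) integrable_on {0..1}"
        using Vcc by (intro integrable_continuous_real continuous_intros)
      fix x :: real assume x: "x \<in> {0..1}"
      have ls: "linepath P Q x \<in> closed_segment P Q" using x by (rule linepath_in_path)
      have "norm (h (linepath P Q x) * (Q - P)) = cmod (Q - P) * (cmod (f (linepath P Q x)) * V \<omega> x)"
        unfolding h_def V_def lp01[OF x] by (simp add: norm_mult)
      also have "\<dots> \<le> cmod (Q - P) * (F * V \<omega> x)"
        using fb[OF ls] Vnn by (intro mult_left_mono mult_right_mono) auto
      finally show "norm (h (linepath P Q x) * (Q - P)) \<le> cmod (Q - P) * F * V \<omega> x" by (simp add: mult_ac)
    qed
    also have "\<dots> = cmod (Q - P) * F * I" unfolding I_def by simp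
    finally have b1: "cmod (contour_integral (linepath P Q) h) \<le> cmod (Q - P) * F * I" .
    have sqb: "(cmod (contour_integral (linepath P Q) h))\<^sup>2 \<le> (cmod (Q - P))\<^sup>2 * F\<^sup>2 * I\<^sup>2"
      using power_mono[OF b1, of 2] by (simp add: power_mult_distrib)
    have In: "ennreal I = (\<integral>\<^sup>+\<tau>. ennreal (indicator {0..1} \<tau> * V \<omega> \<tau>) \<partial>lborel)"
      using nn_integral_has_integral_lebesgue[of "{0..1}" "V \<omega>" I] Vnn
        integrable_integral[OF integrable_continuous_real[OF Vcc]] unfolding I_def by simp
    have CS: "(ennreal I)\<^sup>2 \<le> A * (\<integral>\<^sup>+\<tau>. G \<omega> \<tau> \<partial>lborel)"
    proof -
      define f1 where "f1 \<tau> = ennreal (indicator {0..1} \<tau> * sqrt (w \<tau>))" for \<tau>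
      define g1 where "g1 \<tau> = ennreal (indicator {0..1} \<tau> * (V \<omega> \<tau> / sqrt (w \<tau>)))" for \<tau>
      have Vm: "V \<omega> \<in> borel_measurable borel" using Vc[OF om] borel_measurable_continuous_onI by blast
      have f1m: "f1 \<in> borel_measurable lborel" unfolding f1_def by measurable
      have g1m: "g1 \<in> borel_measurable lborel" unfolding g1_def using Vm by measurable
      have e1: "f1 \<tau> * g1 \<tau> = ennreal (indicator {0..1} \<tau> * V \<omega> \<tau>)" for \<tau>
        using wpos[of \<tau>] Vnn[of \<tau>] unfolding f1_def g1_def
        by (auto simp: indicator_def ennreal_mult[symmetric])
      have e2: "f1 \<tau> ^ 2 = ennreal (indicator {0..1} \<tau> * w \<tau>)" for \<tau>
        using wpos[of \<tau>] unfolding f1_def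
        by (auto simp: indicator_def ennreal_power)
      have e3: "g1 \<tau> ^ 2 = G \<omega> \<tau>" for \<tau>
        using wpos[of \<tau>] Vnn[of \<tau>] unfolding g1_def G_def
        by (auto simp: indicator_def ennreal_power power_divide)
      show ?thesis
        using Cauchy_Schwarz_nn_integral[OF f1m g1m] unfolding e1 e2 e3 In A_def .
    qed
    have "ennreal ((cmod (contour_integral (linepath P Q) h))\<^sup>2) \<le> ennreal ((cmod (Q - P))\<^sup>2 * F\<^sup>2 * I\<^sup>2)"
      using sqb by (rule ennreal_leI)
    also have "\<dots> = K * (ennreal I)\<^sup>2"
      unfolding K_def using I0 by (simp add: ennreal_mult ennreal_power)
    also have "\<dots> \<le> K * (A * (\<integral>\<^sup>+\<tau>. G \<omega> \<tau> \<partial>lborel))" using CS by (rule mult_left_mono) simp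
    also have "\<dots> = B \<omega>" unfolding B_def by (simp add: mult_ac)
    finally show ?thesis unfolding h_def .
  qed
  have inner: "(\<integral>\<^sup>+\<omega>. G \<omega> \<tau> \<partial>M) \<le> ennreal (indicator {0..1} \<tau> * w \<tau>)" for \<tau>
  proof (cases "\<tau> \<in> {0..1}")
    case False then show ?thesis by (simp add: G_def)
  next
    case True
    have zm: "(\<lambda>\<omega>. ennreal ((V \<omega> \<tau>)\<^sup>2)) \<in> borel_measurable M"
      unfolding V_def using meas[OF lpU1[of \<tau>]] meas[OF lpU2[of \<tau>]] by measurable
    have "(\<integral>\<^sup>+\<omega>. G \<omega> \<tau> \<partial>M) = (\<integral>\<^sup>+\<omega>. ennreal (1 / w \<tau>) * ennreal ((V \<omega> \<tau>)\<^sup>2) \<partial>M)"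
      using True wpos[of \<tau>] by (intro nn_integral_cong) (simp add: G_def ennreal_mult[symmetric])
    also have "\<dots> = ennreal (1 / w \<tau>) * (\<integral>\<^sup>+\<omega>. ennreal ((V \<omega> \<tau>)\<^sup>2) \<partial>M)"
      using zm by (rule nn_integral_cmult)
    also have "(\<integral>\<^sup>+\<omega>. ennreal ((V \<omega> \<tau>)\<^sup>2) \<partial>M) \<le> ennreal ((w \<tau>)\<^sup>2)"
    proof -
      have "(\<integral>\<^sup>+\<omega>. ennreal ((V \<omega> \<tau>)\<^sup>2) \<partial>M) \<le> ennreal (cH H * \<bar>\<epsilon> - \<eta>\<bar> powr \<alpha> * (Im (lp \<tau>) + min \<epsilon> \<eta>) powr (2 * H - 2 - \<alpha>))"
        unfolding V_def c1_def c2_def using VAR[OF cov H \<alpha> lpIm[of \<tau>] e(1,2)] by simp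
      also have "cH H * \<bar>\<epsilon> - \<eta>\<bar> powr \<alpha> * (Im (lp \<tau>) + min \<epsilon> \<eta>) powr (2 * H - 2 - \<alpha>) = (w \<tau>)\<^sup>2"
        unfolding w_def m0_def using cpos by simp
      finally show ?thesis .
    qed
    then have "ennreal (1 / w \<tau>) * (\<integral>\<^sup>+\<omega>. ennreal ((V \<omega> \<tau>)\<^sup>2) \<partial>M) \<le> ennreal (1 / w \<tau>) * ennreal ((w \<tau>)\<^sup>2)"
      by (rule mult_left_mono) simp
    also have "\<dots> = ennreal (indicator {0..1} \<tau> * w \<tau>)"
      using True wpos[of \<tau>] by (simp add: ennreal_mult[symmetric] power2_eq_square)
    finally show ?thesis .
  qed
  have "(\<integral>\<^sup>+\<omega>. B \<omega> \<partial>M) = K * A * (\<integral>\<^sup>+\<omega>. (\<integral>\<^sup>+\<tau>. G \<omega> \<tau> \<partial>lborel) \<partial>M)"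
    unfolding B_def using lborel.borel_measurable_nn_integral[OF Gm'] by (rule nn_integral_cmult)
  also have "(\<integral>\<^sup>+\<omega>. (\<integral>\<^sup>+\<tau>. G \<omega> \<tau> \<partial>lborel) \<partial>M) = (\<integral>\<^sup>+\<tau>. (\<integral>\<^sup>+\<omega>. G \<omega> \<tau> \<partial>M) \<partial>lborel)"
    using PSF.Fubini'[OF Gm'] by simp
  also have "\<dots> \<le> A" unfolding A_def by (intro nn_integral_mono inner)
  finally have "(\<integral>\<^sup>+\<omega>. B \<omega> \<partial>M) \<le> K * A * A" by (simp add: mult_left_mono)
  then have Bint: "(\<integral>\<^sup>+\<omega>. B \<omega> \<partial>M) \<le> K * A\<^sup>2" by (simp add: power2_eq_square mult_ac)
  show ?thesis
    using Bm pw Bint unfolding K_def A_def w_def lp_def c1_def c2_def m0_def by blast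
qed




lemma WB:
  fixes g :: "real \<Rightarrow> complex"
  assumes L: "L > 0" and m0: "m0 > 0" and C: "C \<ge> 0" and e2: "-2 < e2" "e2 < 0"
    and hIm: "\<And>\<tau>. \<tau> \<in> {0<..1} \<Longrightarrow> Im (g \<tau>) \<ge> \<tau> * L"
  shows "(\<integral>\<^sup>+\<tau>. ennreal (indicator {0..1} \<tau> * sqrt (C * (Im (g \<tau>) + m0) powr e2)) \<partial>lborel)
      \<le> ennreal (sqrt C * L powr (e2 / 2) / (e2 / 2 + 1))"
proof -
  define \<kappa> where "\<kappa> = e2 / 2"
  have k: "-1 < \<kappa>" "\<kappa> < 0" using e2 by (auto simp: \<kappa>_def)
  have pw: "ennreal (indicator {0..1} \<tau> * sqrt (C * (Im (g \<tau>) + m0) powr e2))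
      \<le> ennreal (indicator {0..1} \<tau> * (sqrt C * L powr \<kappa> * \<tau> powr \<kappa>))" if t0: "\<tau> \<noteq> 0" for \<tau>
  proof (cases "\<tau> \<in> {0..1}")
    case True
    then have t: "\<tau> \<in> {0<..1}" using t0 by auto
    have tl: "\<tau> * L > 0" using t L by simp
    have p: "Im (g \<tau>) + m0 \<ge> \<tau> * L" using hIm[OF t] m0 by simp
    have pp: "Im (g \<tau>) + m0 > 0" using p tl by linarith
    have "sqrt (C * (Im (g \<tau>) + m0) powr e2) = sqrt C * (Im (g \<tau>) + m0) powr \<kappa>"
    proof -
      have "sqrt ((Im (g \<tau>) + m0) powr e2) = ((Im (g \<tau>) + m0) powr e2) powr (1/2)"
        by (simp add: powr_half_sqrt)
      also have "\<dots> = (Im (g \<tau>) + m0) powr \<kappa>" by (simp add: powr_powr \<kappa>_def)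
      finally show ?thesis by (simp add: real_sqrt_mult)
    qed
    also have "\<dots> \<le> sqrt C * (\<tau> * L) powr \<kappa>"
    proof (rule mult_left_mono)
      show "(Im (g \<tau>) + m0) powr \<kappa> \<le> (\<tau> * L) powr \<kappa>"
        by (rule powr_mono2') (use p tl k in auto)
    qed (use C in simp)
    also have "\<dots> = sqrt C * L powr \<kappa> * \<tau> powr \<kappa>"
      using t L by (simp add: powr_mult mult_ac)
    finally show ?thesis using True by (intro ennreal_leI) simp
  qed simp
  have "(\<integral>\<^sup>+\<tau>. ennreal (indicator {0..1} \<tau> * sqrt (C * (Im (g \<tau>) + m0) powr e2)) \<partial>lborel)
      \<le> (\<integral>\<^sup>+\<tau>. ennreal (indicator {0..1} \<tau> * (sqrt C * L powr \<kappa> * \<tau> powr \<kappa>)) \<partial>lborel)"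
  proof (rule nn_integral_mono_AE)
    show "AE \<tau> in lborel. ennreal (indicator {0..1} \<tau> * sqrt (C * (Im (g \<tau>) + m0) powr e2))
      \<le> ennreal (indicator {0..1} \<tau> * (sqrt C * L powr \<kappa> * \<tau> powr \<kappa>))"
      using AE_lborel_singleton[of 0] by (rule AE_mp) (use pw in blast)
  qed
  also have "\<dots> = ennreal (sqrt C * L powr \<kappa> * (1 / (\<kappa> + 1)))"
  proof -
    have "((\<lambda>x. x powr \<kappa>) has_integral (1 / (\<kappa> + 1))) {0..1}"
      using has_integral_powr_from_0[of \<kappa> 1] k by simp
    then have "((\<lambda>x. sqrt C * L powr \<kappa> * x powr \<kappa>) has_integral (sqrt C * L powr \<kappa> * (1 / (\<kappa> + 1)))) {0..1}"
      using has_integral_mult_right[of "\<lambda>x. x powr \<kappa>" "1 / (\<kappa> + 1)" "{0..1}" "sqrt C * L powr \<kappa>"] by (simp add: mult_ac)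
    moreover have "\<And>x. x \<in> {0..1} \<Longrightarrow> 0 \<le> sqrt C * L powr \<kappa> * x powr \<kappa>" using C by simp
    ultimately show ?thesis
      using nn_integral_has_integral_lebesgue[of "{0..1}" "\<lambda>x. sqrt C * L powr \<kappa> * x powr \<kappa>"] by simp
  qed
  also have "sqrt C * L powr \<kappa> * (1 / (\<kappa> + 1)) = sqrt C * L powr (e2 / 2) / (e2 / 2 + 1)"
    by (simp add: \<kappa>_def)
  finally show ?thesis .
qed

lemma SEG:
  fixes Z :: "'a \<Rightarrow> complex \<Rightarrow> complex" and M :: "'a measure" and f :: "complex \<Rightarrow> complex"
  assumes prob: "prob_space M"
    and meas: "\<And>z. z \<in> upper_half \<Longrightarrow> (\<lambda>\<omega>. Z \<omega> z) \<in> borel_measurable M"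
    and hol: "\<And>\<omega>. \<omega> \<in> space M \<Longrightarrow> Z \<omega> holomorphic_on upper_half"
    and cov: "\<And>z w. z \<in> upper_half \<Longrightarrow> w \<in> upper_half \<Longrightarrow>
        integrable M (\<lambda>\<omega>. Z \<omega> z * cnj (Z \<omega> w)) \<and>
        (\<integral>\<omega>. Z \<omega> z * cnj (Z \<omega> w) \<partial>M)
          = of_real (cH H) * (- \<i> * (z - cnj w)) powr (of_real (2 * H - 2))"
    and H: "0 < H" "H < 1/2" and \<alpha>: "0 < \<alpha>" "\<alpha> < 2 * H"
    and PQ: "Im P \<ge> 0" "Im Q \<ge> 0" and L: "L > 0" "cmod (Q - P) = L"
    and hIm: "\<And>\<tau>. \<tau> \<in> {0<..1} \<Longrightarrow> Im (linepath P Q \<tau>) \<ge> \<tau> * L"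
    and fc: "continuous_on (closed_segment P Q) f" and fb: "\<And>z. z \<in> closed_segment P Q \<Longrightarrow> cmod (f z) \<le> F"
    and e: "\<epsilon> > 0" "\<eta> > 0" "\<epsilon> \<noteq> \<eta>"
  shows "\<exists>B. B \<in> borel_measurable M \<and>
     (\<forall>\<omega>\<in>space M. ennreal ((cmod (contour_integral (linepath P Q) (\<lambda>z. f z * (Z \<omega> (z + \<i> * of_real \<epsilon>) - Z \<omega> (z + \<i> * of_real \<eta>)))))\<^sup>2) \<le> B \<omega>) \<and>
     (\<integral>\<^sup>+\<omega>. B \<omega> \<partial>M) \<le> ennreal (F\<^sup>2 * cH H * \<bar>\<epsilon> - \<eta>\<bar> powr \<alpha> * L powr (2 * H - \<alpha>) / ((2 * H - 2 - \<alpha>) / 2 + 1)\<^sup>2)"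
proof -
  have \<alpha>1: "\<alpha> < 1" using \<alpha> H by simp
  obtain B where B: "B \<in> borel_measurable M"
     "\<forall>\<omega>\<in>space M. ennreal ((cmod (contour_integral (linepath P Q) (\<lambda>z. f z * (Z \<omega> (z + \<i> * of_real \<epsilon>) - Z \<omega> (z + \<i> * of_real \<eta>)))))\<^sup>2) \<le> B \<omega>"
     and Bi: "(\<integral>\<^sup>+\<omega>. B \<omega> \<partial>M) \<le> ennreal ((cmod (Q - P))\<^sup>2 * F\<^sup>2) *
       (\<integral>\<^sup>+\<tau>. ennreal (indicator {0..1} \<tau> * sqrt (cH H * \<bar>\<epsilon> - \<eta>\<bar> powr \<alpha> * (Im (linepath P Q (max 0 (min 1 \<tau>))) + min \<epsilon> \<eta>) powr (2 * H - 2 - \<alpha>))) \<partial>lborel)\<^sup>2"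
    using GSL[OF prob meas hol cov H(1,2) \<alpha>(1) \<alpha>1 PQ fc fb e] by blast
  define C where "C = cH H * \<bar>\<epsilon> - \<eta>\<bar> powr \<alpha>"
  define e2 where "e2 = 2 * H - 2 - \<alpha>"
  have C0: "C \<ge> 0" using cH_pos[OF H] by (simp add: C_def)
  have e2b: "-2 < e2" "e2 < 0" using \<alpha> H by (auto simp: e2_def)
  have m0: "min \<epsilon> \<eta> > 0" using e by simp
  have A: "(\<integral>\<^sup>+\<tau>. ennreal (indicator {0..1} \<tau> * sqrt (C * (Im (linepath P Q (max 0 (min 1 \<tau>))) + min \<epsilon> \<eta>) powr e2)) \<partial>lborel)
      \<le> ennreal (sqrt C * L powr (e2 / 2) / (e2 / 2 + 1))"
  proof (rule WB[OF L(1) m0 C0 e2b])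
    fix \<tau> :: real assume t: "\<tau> \<in> {0<..1}"
    then have "max 0 (min 1 \<tau>) = \<tau>" by auto
    then show "Im (linepath P Q (max 0 (min 1 \<tau>))) \<ge> \<tau> * L" using hIm[OF t] by simp
  qed
  define a where "a = sqrt C * L powr (e2 / 2) / (e2 / 2 + 1)"
  have a0: "a \<ge> 0" using C0 e2b by (simp add: a_def)
  have "(\<integral>\<^sup>+\<omega>. B \<omega> \<partial>M) \<le> ennreal (L\<^sup>2 * F\<^sup>2) * (ennreal a)\<^sup>2"
  proof -
    have "(\<integral>\<^sup>+\<tau>. ennreal (indicator {0..1} \<tau> * sqrt (cH H * \<bar>\<epsilon> - \<eta>\<bar> powr \<alpha> * (Im (linepath P Q (max 0 (min 1 \<tau>))) + min \<epsilon> \<eta>) powr (2 * H - 2 - \<alpha>))) \<partial>lborel)\<^sup>2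
        \<le> (ennreal a)\<^sup>2"
      using A unfolding C_def e2_def a_def by (intro power_mono) auto
    then show ?thesis using Bi L(2) by (metis (no_types, lifting) mult_left_mono order_trans zero_le)
  qed
  also have "\<dots> = ennreal (L\<^sup>2 * F\<^sup>2 * a\<^sup>2)" using a0 by (simp add: ennreal_mult ennreal_power)
  also have "L\<^sup>2 * F\<^sup>2 * a\<^sup>2 = F\<^sup>2 * cH H * \<bar>\<epsilon> - \<eta>\<bar> powr \<alpha> * L powr (2 * H - \<alpha>) / ((2 * H - 2 - \<alpha>) / 2 + 1)\<^sup>2"
  proof -
    have "(sqrt C)\<^sup>2 = C" using C0 by simp
    moreover have "L\<^sup>2 * (L powr (e2 / 2))\<^sup>2 = L powr (2 * H - \<alpha>)"
    proof -
      have 1: "(L powr (e2 / 2))\<^sup>2 = L powr e2" by (simp add: power2_eq_square powr_add[symmetric])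
      have 2: "L\<^sup>2 = L powr 2" using L by (simp add: powr_numeral)
      have "L\<^sup>2 * (L powr (e2 / 2))\<^sup>2 = L powr (2 + e2)" unfolding 1 2 by (simp add: powr_add)
      also have "2 + e2 = 2 * H - \<alpha>" by (simp add: e2_def)
      finally show ?thesis .
    qed
    ultimately show ?thesis unfolding a_def C_def e2_def
      by (simp add: power_divide power_mult_distrib field_simps)
  qed
  finally show ?thesis using B by blast
qed




lemma sq3:
  fixes x y z :: real
  shows "(x + y + z)\<^sup>2 \<le> 3 * (x\<^sup>2 + y\<^sup>2 + z\<^sup>2)"
proof -
  have "3 * (x\<^sup>2 + y\<^sup>2 + z\<^sup>2) - (x + y + z)\<^sup>2 = (x - y)\<^sup>2 + (y - z)\<^sup>2 + (x - z)\<^sup>2"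
    by (simp add: power2_eq_square algebra_simps)
  moreover have "0 \<le> (x - y)\<^sup>2 + (y - z)\<^sup>2 + (x - z)\<^sup>2" by simp
  ultimately show ?thesis by linarith
qed

lemma sq12:
  fixes a b c :: complex
  shows "(2 * Re (a + b - c))\<^sup>2 \<le> 12 * ((cmod a)\<^sup>2 + (cmod b)\<^sup>2 + (cmod c)\<^sup>2)"
proof -
  have "\<bar>Re (a + b - c)\<bar> \<le> cmod (a + b - c)" by (rule abs_Re_le_cmod)
  also have "\<dots> \<le> cmod (a + b) + cmod c" by (rule norm_triangle_ineq4)
  also have "\<dots> \<le> cmod a + cmod b + cmod c" using norm_triangle_ineq[of a b] by simp
  finally have 1: "\<bar>Re (a + b - c)\<bar> \<le> cmod a + cmod b + cmod c" .
  have "(Re (a + b - c))\<^sup>2 \<le> (cmod a + cmod b + cmod c)\<^sup>2"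
    using power_mono[OF 1, of 2] by simp
  also have "\<dots> \<le> 3 * ((cmod a)\<^sup>2 + (cmod b)\<^sup>2 + (cmod c)\<^sup>2)" by (rule sq3)
  finally have "(Re (a + b - c))\<^sup>2 \<le> 3 * ((cmod a)\<^sup>2 + (cmod b)\<^sup>2 + (cmod c)\<^sup>2)" .
  moreover have "(2 * Re (a + b - c))\<^sup>2 = 4 * (Re (a + b - c))\<^sup>2" by (simp only: power_mult_distrib) simp
  ultimately show ?thesis by linarith
qed




theorem lemma5p3:
  fixes M :: "'a measure" and X :: "nat \<Rightarrow> 'a \<Rightarrow> complex \<Rightarrow> complex"
    and H T :: real and n :: nat
  assumes prob: "prob_space M"
    and H: "1/3 < H" "H < 1/2" and n: "n \<ge> 1" and T: "T > 0"
    and gauss: "\<And>j. j < n \<Longrightarrow> complex_gaussian_process M upper_half (X j)"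
    and analytic: "\<And>j \<omega>. j < n \<Longrightarrow> \<omega> \<in> space M \<Longrightarrow> X j \<omega> holomorphic_on upper_half"
    and centered: "\<And>j z. j < n \<Longrightarrow> z \<in> upper_half \<Longrightarrow>
        integrable M (\<lambda>\<omega>. X j \<omega> z) \<and> (\<integral>\<omega>. X j \<omega> z \<partial>M) = 0"
    and cov0: "\<And>j z w. j < n \<Longrightarrow> z \<in> upper_half \<Longrightarrow> w \<in> upper_half \<Longrightarrow>
        integrable M (\<lambda>\<omega>. X j \<omega> z * X j \<omega> w) \<and> (\<integral>\<omega>. X j \<omega> z * X j \<omega> w \<partial>M) = 0"
    and cov: "\<And>j z w. j < n \<Longrightarrow> z \<in> upper_half \<Longrightarrow> w \<in> upper_half \<Longrightarrow>
        integrable M (\<lambda>\<omega>. X j \<omega> z * cnj (X j \<omega> w)) \<and>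
        (\<integral>\<omega>. X j \<omega> z * cnj (X j \<omega> w) \<partial>M)
          = of_real (cH H) * (- \<i> * (z - cnj w)) powr (of_real (2 * H - 2))"
    and indep: "prob_space.indep_vars M (\<lambda>_. Pi\<^sub>M UNIV (\<lambda>_. borel)) (\<lambda>j \<omega>. X j \<omega>) {..<n}"
  shows "\<forall>\<alpha>. 0 < \<alpha> \<and> \<alpha> < 2 * H \<longrightarrow>
    (\<exists>c::real. \<forall>s t (f :: complex \<Rightarrow> complex) \<epsilon> \<eta>.
       0 \<le> s \<and> s < t \<and> t \<le> T \<and>
       f analytic_on Pi_rect s t \<and>
       (\<forall>u\<in>{s..t}. Im (f (of_real u)) = 0) \<and>
       bounded (f ` Pi_rect s t) \<and>
       \<epsilon> > 0 \<and> \<eta> > 0 \<longrightarrow>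
       (\<integral>\<^sup>+\<omega>. ennreal (\<Sum>j<n.
           (RS_integral (\<lambda>u. Re (f (of_real u))) (Xeps (X j \<omega>) \<epsilon>) s t
            - RS_integral (\<lambda>u. Re (f (of_real u))) (Xeps (X j \<omega>) \<eta>) s t)\<^sup>2) \<partial>M)
       \<le> ennreal (c * (sup_norm_on f (Pi_rect s t))\<^sup>2 * (t - s) powr (2 * H - \<alpha>)
                   * \<bar>\<epsilon> - \<eta>\<bar> powr \<alpha>))"

proof (intro allI impI)
  fix \<alpha> assume \<alpha>: "0 < \<alpha> \<and> \<alpha> < 2 * H"
  have H0: "0 < H" "H < 1/2" using H by auto
  define \<kappa>1 where "\<kappa>1 = (2 * H - 2 - \<alpha>) / 2 + 1"
  define c where "c = 36 * real n * cH H / \<kappa>1\<^sup>2"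
  show "\<exists>c::real. \<forall>s t (f :: complex \<Rightarrow> complex) \<epsilon> \<eta>.
       0 \<le> s \<and> s < t \<and> t \<le> T \<and>
       f analytic_on Pi_rect s t \<and>
       (\<forall>u\<in>{s..t}. Im (f (of_real u)) = 0) \<and>
       bounded (f ` Pi_rect s t) \<and>
       \<epsilon> > 0 \<and> \<eta> > 0 \<longrightarrow>
       (\<integral>\<^sup>+\<omega>. ennreal (\<Sum>j<n.
           (RS_integral (\<lambda>u. Re (f (of_real u))) (Xeps (X j \<omega>) \<epsilon>) s t
            - RS_integral (\<lambda>u. Re (f (of_real u))) (Xeps (X j \<omega>) \<eta>) s t)\<^sup>2) \<partial>M)
       \<le> ennreal (c * (sup_norm_on f (Pi_rect s t))\<^sup>2 * (t - s) powr (2 * H - \<alpha>)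
                   * \<bar>\<epsilon> - \<eta>\<bar> powr \<alpha>)"
  proof (intro exI[of _ c] allI impI)
    fix s t :: real and f :: "complex \<Rightarrow> complex" and \<epsilon> \<eta> :: real
    assume A: "0 \<le> s \<and> s < t \<and> t \<le> T \<and>
       f analytic_on Pi_rect s t \<and>
       (\<forall>u\<in>{s..t}. Im (f (of_real u)) = 0) \<and>
       bounded (f ` Pi_rect s t) \<and>
       \<epsilon> > 0 \<and> \<eta> > 0"
    have st: "s < t" and an: "f analytic_on Pi_rect s t" and real: "\<forall>u\<in>{s..t}. Im (f (of_real u)) = 0"
      and bd: "bounded (f ` Pi_rect s t)" and e: "\<epsilon> > 0" "\<eta> > 0" using A by auto
    define F where "F = sup_norm_on f (Pi_rect s t)"
    define L where "L = t - s"
    have L: "L > 0" using st by (simp add: L_def)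
    have fb: "cmod (f z) \<le> F" if "z \<in> Pi_rect s t" for z
    proof -
      obtain K where "\<forall>y\<in>f ` Pi_rect s t. norm y \<le> K" using bd unfolding bounded_iff by blast
      then have "bdd_above ((\<lambda>z. cmod (f z)) ` Pi_rect s t)" by (auto intro: bdd_aboveI2)
      then show ?thesis unfolding F_def sup_norm_on_def using cSUP_upper[OF that] by blast
    qed
    have fcont: "continuous_on (Pi_rect s t) f"
      using holomorphic_on_imp_continuous_on[OF analytic_imp_holomorphic[OF an]] .
    show "(\<integral>\<^sup>+\<omega>. ennreal (\<Sum>j<n.
           (RS_integral (\<lambda>u. Re (f (of_real u))) (Xeps (X j \<omega>) \<epsilon>) s t
            - RS_integral (\<lambda>u. Re (f (of_real u))) (Xeps (X j \<omega>) \<eta>) s t)\<^sup>2) \<partial>M)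
       \<le> ennreal (c * (sup_norm_on f (Pi_rect s t))\<^sup>2 * (t - s) powr (2 * H - \<alpha>)
                   * \<bar>\<epsilon> - \<eta>\<bar> powr \<alpha>)"
    proof (cases "\<epsilon> = \<eta>")
      case True then show ?thesis by simp
    next
      case False
      note e3 = e False
      define P1 where "P1 = (of_real s :: complex)"
      define Q1 where "Q1 = of_real s + \<i> * of_real (t - s)"
      define Q2 where "Q2 = of_real t + \<i> * of_real (t - s)"
      define P3 where "P3 = (of_real t :: complex)"
      have inP: "P1 \<in> Pi_rect s t" "Q1 \<in> Pi_rect s t" "Q2 \<in> Pi_rect s t" "P3 \<in> Pi_rect s t"
        using st unfolding P1_def Q1_def Q2_def P3_def Pi_rect_def by auto
      have cvx: "convex (Pi_rect s t)" by (simp add: Pi_rect_cbox convex_box)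
      have segP: "closed_segment P Q \<subseteq> Pi_rect s t" if "P \<in> Pi_rect s t" "Q \<in> Pi_rect s t" for P Q
        using closed_segment_subset[OF that cvx] .
      have Ims: "Im P1 \<ge> 0" "Im Q1 \<ge> 0" "Im Q2 \<ge> 0" "Im P3 \<ge> 0" using st
        by (auto simp: P1_def Q1_def Q2_def P3_def)
      have dist: "cmod (Q1 - P1) = L" "cmod (Q2 - Q1) = L" "cmod (Q2 - P3) = L"
      proof -
        have nd: "cmod (complex_of_real t - complex_of_real s) = t - s"
          by (metis of_real_diff norm_of_real abs_of_pos diff_gt_0_iff_gt st)
        show "cmod (Q1 - P1) = L" "cmod (Q2 - Q1) = L" "cmod (Q2 - P3) = L"
          using st nd by (auto simp: P1_def Q1_def Q2_def P3_def L_def norm_mult)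
      qed
      have hIm1: "Im (linepath P1 Q1 \<tau>) \<ge> \<tau> * L" for \<tau>
        by (simp add: P1_def Q1_def L_def linepath_def)
      have hIm2: "Im (linepath Q1 Q2 \<tau>) \<ge> \<tau> * L" if "\<tau> \<in> {0<..1}" for \<tau>
      proof -
        have "Im (linepath Q1 Q2 \<tau>) = L" by (simp add: Q1_def Q2_def L_def linepath_def algebra_simps)
        then show ?thesis using that L by (simp add: mult_le_cancel_right1)
      qed
      have hIm3: "Im (linepath P3 Q2 \<tau>) \<ge> \<tau> * L" for \<tau>
        by (simp add: P3_def Q2_def L_def linepath_def)
      have meas: "\<And>z. z \<in> upper_half \<Longrightarrow> (\<lambda>\<omega>. X j \<omega> z) \<in> borel_measurable M" if "j < n" for j
        using gauss[OF that] unfolding complex_gaussian_process_def by blast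
      have hol: "\<And>\<omega>. \<omega> \<in> space M \<Longrightarrow> X j \<omega> holomorphic_on upper_half" if "j < n" for j
        using analytic that by blast
      have covj: "\<And>z w. z \<in> upper_half \<Longrightarrow> w \<in> upper_half \<Longrightarrow>
        integrable M (\<lambda>\<omega>. X j \<omega> z * cnj (X j \<omega> w)) \<and>
        (\<integral>\<omega>. X j \<omega> z * cnj (X j \<omega> w) \<partial>M)
          = of_real (cH H) * (- \<i> * (z - cnj w)) powr (of_real (2 * H - 2))" if "j < n" for j
        using cov that by blast
      define Xb where "Xb = F\<^sup>2 * cH H * \<bar>\<epsilon> - \<eta>\<bar> powr \<alpha> * L powr (2 * H - \<alpha>) / ((2 * H - 2 - \<alpha>) / 2 + 1)\<^sup>2"
      define CC where "CC j \<omega> P Q = contour_integral (linepath P Q) (\<lambda>z. f z * (X j \<omega> (z + \<i> * of_real \<epsilon>) - X j \<omega> (z + \<i> * of_real \<eta>)))" for j \<omega> P Q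
      have seg: "\<exists>B. B \<in> borel_measurable M \<and>
          (\<forall>\<omega>\<in>space M. ennreal ((cmod (CC j \<omega> P Q))\<^sup>2) \<le> B \<omega>) \<and> (\<integral>\<^sup>+\<omega>. B \<omega> \<partial>M) \<le> ennreal Xb"
        if j: "j < n" and PQ: "P \<in> Pi_rect s t" "Q \<in> Pi_rect s t" "Im P \<ge> 0" "Im Q \<ge> 0" "cmod (Q - P) = L"
          and hI: "\<And>\<tau>. \<tau> \<in> {0<..1} \<Longrightarrow> Im (linepath P Q \<tau>) \<ge> \<tau> * L" for j P Q
        unfolding CC_def Xb_def
      proof (rule SEG[OF prob meas[OF j] hol[OF j] covj[OF j] H0 _ _ PQ(3,4) L PQ(5) hI _ _ e3])
        show "0 < \<alpha>" "\<alpha> < 2 * H" using \<alpha> by auto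
        show "continuous_on (closed_segment P Q) f" using continuous_on_subset[OF fcont segP[OF PQ(1,2)]] .
        show "\<And>z. z \<in> closed_segment P Q \<Longrightarrow> cmod (f z) \<le> F" using fb segP[OF PQ(1,2)] by blast
      qed
      have "\<forall>j. \<exists>B. j < n \<longrightarrow> B \<in> borel_measurable M \<and>
          (\<forall>\<omega>\<in>space M. ennreal ((cmod (CC j \<omega> P1 Q1))\<^sup>2) \<le> B \<omega>) \<and> (\<integral>\<^sup>+\<omega>. B \<omega> \<partial>M) \<le> ennreal Xb"
        using seg[OF _ inP(1,2) Ims(1,2) dist(1)] hIm1 by blast
      then obtain B1 where B1: "\<And>j. j < n \<Longrightarrow> B1 j \<in> borel_measurable M \<and>
          (\<forall>\<omega>\<in>space M. ennreal ((cmod (CC j \<omega> P1 Q1))\<^sup>2) \<le> B1 j \<omega>) \<and> (\<integral>\<^sup>+\<omega>. B1 j \<omega> \<partial>M) \<le> ennreal Xb"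
        by metis
      have "\<forall>j. \<exists>B. j < n \<longrightarrow> B \<in> borel_measurable M \<and>
          (\<forall>\<omega>\<in>space M. ennreal ((cmod (CC j \<omega> Q1 Q2))\<^sup>2) \<le> B \<omega>) \<and> (\<integral>\<^sup>+\<omega>. B \<omega> \<partial>M) \<le> ennreal Xb"
        using seg[OF _ inP(2,3) Ims(2,3) dist(2)] hIm2 by blast
      then obtain B2 where B2: "\<And>j. j < n \<Longrightarrow> B2 j \<in> borel_measurable M \<and>
          (\<forall>\<omega>\<in>space M. ennreal ((cmod (CC j \<omega> Q1 Q2))\<^sup>2) \<le> B2 j \<omega>) \<and> (\<integral>\<^sup>+\<omega>. B2 j \<omega> \<partial>M) \<le> ennreal Xb"
        by metis
      have "\<forall>j. \<exists>B. j < n \<longrightarrow> B \<in> borel_measurable M \<and>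
          (\<forall>\<omega>\<in>space M. ennreal ((cmod (CC j \<omega> P3 Q2))\<^sup>2) \<le> B \<omega>) \<and> (\<integral>\<^sup>+\<omega>. B \<omega> \<partial>M) \<le> ennreal Xb"
        using seg[OF _ inP(4,3) Ims(4,3) dist(3)] hIm3 by blast
      then obtain B3 where B3: "\<And>j. j < n \<Longrightarrow> B3 j \<in> borel_measurable M \<and>
          (\<forall>\<omega>\<in>space M. ennreal ((cmod (CC j \<omega> P3 Q2))\<^sup>2) \<le> B3 j \<omega>) \<and> (\<integral>\<^sup>+\<omega>. B3 j \<omega> \<partial>M) \<le> ennreal Xb"
        by metis
      define D where "D j \<omega> = RS_integral (\<lambda>u. Re (f (of_real u))) (Xeps (X j \<omega>) \<epsilon>) s t
            - RS_integral (\<lambda>u. Re (f (of_real u))) (Xeps (X j \<omega>) \<eta>) s t" for j \<omega>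
      have pwj: "ennreal ((D j \<omega>)\<^sup>2) \<le> 12 * (B1 j \<omega> + B2 j \<omega> + B3 j \<omega>)" if j: "j < n" and om: "\<omega> \<in> space M" for j \<omega>
      proof -
        have "D j \<omega> = 2 * Re (CC j \<omega> P1 Q1 + CC j \<omega> Q1 Q2 - CC j \<omega> P3 Q2)"
          unfolding D_def CC_def P1_def Q1_def Q2_def P3_def
          by (rule DL[OF hol[OF j om] an real st e])
        then have "(D j \<omega>)\<^sup>2 \<le> 12 * ((cmod (CC j \<omega> P1 Q1))\<^sup>2 + (cmod (CC j \<omega> Q1 Q2))\<^sup>2 + (cmod (CC j \<omega> P3 Q2))\<^sup>2)"
          using sq12 by simp
        then have "ennreal ((D j \<omega>)\<^sup>2) \<le> ennreal (12 * ((cmod (CC j \<omega> P1 Q1))\<^sup>2 + (cmod (CC j \<omega> Q1 Q2))\<^sup>2 + (cmod (CC j \<omega> P3 Q2))\<^sup>2))"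
          by (rule ennreal_leI)
        also have "\<dots> = 12 * (ennreal ((cmod (CC j \<omega> P1 Q1))\<^sup>2) + ennreal ((cmod (CC j \<omega> Q1 Q2))\<^sup>2) + ennreal ((cmod (CC j \<omega> P3 Q2))\<^sup>2))"
          by (simp add: ennreal_mult ennreal_plus)
        also have "\<dots> \<le> 12 * (B1 j \<omega> + B2 j \<omega> + B3 j \<omega>)"
          using B1[OF j] B2[OF j] B3[OF j] om by (intro mult_left_mono add_mono) auto
        finally show ?thesis .
      qed
      have "(\<integral>\<^sup>+\<omega>. ennreal (\<Sum>j<n. (D j \<omega>)\<^sup>2) \<partial>M) \<le> (\<integral>\<^sup>+\<omega>. (\<Sum>j<n. 12 * (B1 j \<omega> + B2 j \<omega> + B3 j \<omega>)) \<partial>M)"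
      proof (rule nn_integral_mono)
        fix \<omega> assume om: "\<omega> \<in> space M"
        have "ennreal (\<Sum>j<n. (D j \<omega>)\<^sup>2) = (\<Sum>j<n. ennreal ((D j \<omega>)\<^sup>2))" by simp
        also have "\<dots> \<le> (\<Sum>j<n. 12 * (B1 j \<omega> + B2 j \<omega> + B3 j \<omega>))"
          using pwj om by (intro sum_mono) auto
        finally show "ennreal (\<Sum>j<n. (D j \<omega>)\<^sup>2) \<le> (\<Sum>j<n. 12 * (B1 j \<omega> + B2 j \<omega> + B3 j \<omega>))" .
      qed
      also have "\<dots> = (\<Sum>j<n. 12 * ((\<integral>\<^sup>+\<omega>. B1 j \<omega> \<partial>M) + (\<integral>\<^sup>+\<omega>. B2 j \<omega> \<partial>M) + (\<integral>\<^sup>+\<omega>. B3 j \<omega> \<partial>M)))"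
      proof -
        have m: "B1 j \<in> borel_measurable M" "B2 j \<in> borel_measurable M" "B3 j \<in> borel_measurable M" if "j < n" for j
          using B1[OF that] B2[OF that] B3[OF that] by auto
        have "(\<integral>\<^sup>+\<omega>. (\<Sum>j<n. 12 * (B1 j \<omega> + B2 j \<omega> + B3 j \<omega>)) \<partial>M) = (\<Sum>j<n. (\<integral>\<^sup>+\<omega>. 12 * (B1 j \<omega> + B2 j \<omega> + B3 j \<omega>) \<partial>M))"
          using m by (intro nn_integral_sum) auto
        also have "\<dots> = (\<Sum>j<n. 12 * ((\<integral>\<^sup>+\<omega>. B1 j \<omega> \<partial>M) + (\<integral>\<^sup>+\<omega>. B2 j \<omega> \<partial>M) + (\<integral>\<^sup>+\<omega>. B3 j \<omega> \<partial>M)))"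
        proof (rule sum.cong[OF refl])
          fix j assume "j \<in> {..<n}"
          then have j: "j < n" by simp
          have "(\<integral>\<^sup>+\<omega>. 12 * (B1 j \<omega> + B2 j \<omega> + B3 j \<omega>) \<partial>M) = 12 * (\<integral>\<^sup>+\<omega>. (B1 j \<omega> + B2 j \<omega> + B3 j \<omega>) \<partial>M)"
            using m[OF j] by (intro nn_integral_cmult) auto
          also have "(\<integral>\<^sup>+\<omega>. (B1 j \<omega> + B2 j \<omega> + B3 j \<omega>) \<partial>M) = (\<integral>\<^sup>+\<omega>. (B1 j \<omega> + B2 j \<omega>) \<partial>M) + (\<integral>\<^sup>+\<omega>. B3 j \<omega> \<partial>M)"
            using m[OF j] by (intro nn_integral_add) auto
          also have "(\<integral>\<^sup>+\<omega>. (B1 j \<omega> + B2 j \<omega>) \<partial>M) = (\<integral>\<^sup>+\<omega>. B1 j \<omega> \<partial>M) + (\<integral>\<^sup>+\<omega>. B2 j \<omega> \<partial>M)"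
            using m[OF j] by (intro nn_integral_add) auto
          finally show "(\<integral>\<^sup>+\<omega>. 12 * (B1 j \<omega> + B2 j \<omega> + B3 j \<omega>) \<partial>M) = 12 * ((\<integral>\<^sup>+\<omega>. B1 j \<omega> \<partial>M) + (\<integral>\<^sup>+\<omega>. B2 j \<omega> \<partial>M) + (\<integral>\<^sup>+\<omega>. B3 j \<omega> \<partial>M))" .
        qed
        finally show ?thesis .
      qed
      also have "\<dots> \<le> (\<Sum>j<n. 12 * (ennreal Xb + ennreal Xb + ennreal Xb))"
        using B1 B2 B3 by (intro sum_mono mult_left_mono add_mono) auto
      also have "\<dots> = ennreal (real n * (36 * Xb))"
      proof -
        have X0: "Xb \<ge> 0" unfolding Xb_def using cH_pos[OF H0] by simp
        have "12 * (ennreal Xb + ennreal Xb + ennreal Xb) = ennreal (36 * Xb)"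
        proof -
          have "ennreal Xb + ennreal Xb + ennreal Xb = ennreal (3 * Xb)" using X0 by (simp add: ennreal_plus[symmetric] del: ennreal_plus)
          moreover have "12 * ennreal (3 * Xb) = ennreal (36 * Xb)"
          proof -
            have "ennreal (12 * (3 * Xb)) = ennreal 12 * ennreal (3 * Xb)" using X0 by (intro ennreal_mult) auto
            then show ?thesis by simp
          qed
          ultimately show ?thesis by simp
        qed
        then show ?thesis using X0 by (simp add: ennreal_mult' ennreal_of_nat_eq_real_of_nat)
      qed
      also have "real n * (36 * Xb) = c * F\<^sup>2 * L powr (2 * H - \<alpha>) * \<bar>\<epsilon> - \<eta>\<bar> powr \<alpha>"
        unfolding Xb_def c_def \<kappa>1_def by (simp add: field_simps)
      finally show ?thesis unfolding D_def F_def L_def .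
    qed
  qed
qed


end
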